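(* Let $n,m,p\in\mathbb{N}$ with $m\ge p$, $A\in\mathbb{R}^{n\times n}$, $B\in\mathbb{R}^{n\times m}$, $C\in\mathbb{R}^{p\times n}$, and let $f:\mathbb{R}\times\mathbb{R}^n\times\mathbb{R}^m\to\mathbb{R}^n$ be continuous and bounded. Assume: (P1) $L\in\mathcal{C}^\infty(\mathbb{R}\to\mathbb{R}^{m\times m})$ is such that $L,\dot L,\ldots,L^{(n)}$ are bounded and there is $q\in\mathbb{N}$ with $\operatorname{rk} BL(t)=q\ge p$ for all $t\in\mathbb{R}$; (P2) there is $r\in\mathbb{N}$ such that $CA^kBL(t)=0$ for all $t\in\mathbb{R}$ and $CA^kf(t,x,u)=0$ for all $(t,x,u)$, for $k=0,\ldots,r-2$, and $\Gamma:=CA^{r-1}B$ satisfies $\operatorname{rk}\Gamma L(t)=p$ for all $t\in\mathbb{R}$. Let $\mathcal{B}(t)$, $\mathcal{C}$ and $U(t)$ be as in the context. If there exists $\alpha>0$ such that $$\det\Big(\mathcal{C}\mathcal{B}(t)\big(\mathcal{C}\mathcal{B}(t)\big)^\top\Big)\ge\alpha\quad\text{for all }t\in\mathbb{R},$$ then $U$ is a Lyapunov transformation. The converse implication is false in general: there exist data $(A,B,C,f,L)$ satisfying (P1) and (P2) for which $U$ is a Lyapunov transformation but no such $\alpha>0$ exists.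
   Context: $M^\dagger$ denotes the Moore–Penrose pseudoinverse. For a matrix function $M$, $(\tfrac{d}{dt}-A)(M(t)):=\dot M(t)-AM(t)$, applied iteratively for powers. Define $\mathcal{B}(t):=\big[BL(t),(\tfrac{d}{dt}-A)(BL(t)),\ldots,(\tfrac{d}{dt}-A)^{r-1}(BL(t))\big]\in\mathbb{R}^{n\times rm}$; $\mathcal{C}:=[C^\top,(CA)^\top,\ldots,(CA^{r-1})^\top]^\top\in\mathbb{R}^{rp\times n}$; $\rho:=\operatorname{rk}\mathcal{C}$; $V\in\mathbb{R}^{n\times(n-\rho)}$ with $\operatorname{im}V=\ker\mathcal{C}$; $\mathcal{N}(t):=V^\dagger[I_n-\mathcal{B}(t)(\mathcal{C}\mathcal{B}(t))^\dagger\mathcal{C}]$; $U(t):=\begin{bmatrix}\mathcal{C}\\ \mathcal{N}(t)\end{bmatrix}$ (under (P1),(P2) this is a square invertible matrix). A map $M\in\mathcal{C}^1(\mathbb{R}\to\mathbf{Gl}_n(\mathbb{R}))$ is called a Lyapunov transformation if $M$, $M^{-1}$ and $\dot M$ are bounded on $\mathbb{R}$. *)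

theory Defs
  imports "HOL-Analysis.Analysis" "Jordan_Normal_Form.DL_Rank" "Jordan_Normal_Form.Determinant"
begin

definition mrank :: "real mat \<Rightarrow> nat" where
  "mrank M = vec_space.rank (dim_row M) M"

definition pinv :: "real mat \<Rightarrow> real mat" where
  "pinv M = (THE X. X \<in> carrier_mat (dim_col M) (dim_row M) \<and>
      M * X * M = M \<and> X * M * X = X \<and>
      transpose_mat (M * X) = M * X \<and> transpose_mat (X * M) = X * M)"

definition mderiv :: "(real \<Rightarrow> real mat) \<Rightarrow> real \<Rightarrow> real mat" where
  "mderiv M t = mat (dim_row (M t)) (dim_col (M t)) (\<lambda>(i,j). deriv (\<lambda>s. M s $$ (i,j)) t)"

definition mderiv_n :: "nat \<Rightarrow> (real \<Rightarrow> real mat) \<Rightarrow> real \<Rightarrow> real mat" where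
  "mderiv_n k M t = mat (dim_row (M t)) (dim_col (M t)) (\<lambda>(i,j). (deriv ^^ k) (\<lambda>s. M s $$ (i,j)) t)"

definition DA :: "real mat \<Rightarrow> (real \<Rightarrow> real mat) \<Rightarrow> real \<Rightarrow> real mat" where
  "DA A M = (\<lambda>t. mderiv M t - A * M t)"

definition smooth_mat_fun :: "nat \<Rightarrow> nat \<Rightarrow> (real \<Rightarrow> real mat) \<Rightarrow> bool" where
  "smooth_mat_fun a b M \<longleftrightarrow> (\<forall>t. M t \<in> carrier_mat a b) \<and>
     (\<forall>k i j t. i < a \<longrightarrow> j < b \<longrightarrow> ((deriv ^^ k) (\<lambda>s. M s $$ (i,j))) differentiable (at t))"

definition bounded_mat_fun :: "(real \<Rightarrow> real mat) \<Rightarrow> bool" where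
  "bounded_mat_fun M \<longleftrightarrow> (\<exists>K. \<forall>t i j. i < dim_row (M t) \<longrightarrow> j < dim_col (M t) \<longrightarrow> \<bar>M t $$ (i,j)\<bar> \<le> K)"

definition lyapunov_transformation :: "nat \<Rightarrow> (real \<Rightarrow> real mat) \<Rightarrow> bool" where
  "lyapunov_transformation n M \<longleftrightarrow>
     (\<forall>t. M t \<in> carrier_mat n n \<and> invertible_mat (M t)) \<and>
     (\<forall>i<n. \<forall>j<n. (\<forall>t. (\<lambda>s. M s $$ (i,j)) differentiable (at t)) \<and>
                  continuous_on UNIV (deriv (\<lambda>s. M s $$ (i,j)))) \<and>
     bounded_mat_fun M \<and>
     (\<exists>K. \<forall>t. \<exists>Mi \<in> carrier_mat n n. M t * Mi = 1\<^sub>m n \<and> Mi * M t = 1\<^sub>m n \<and>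
              (\<forall>i<n. \<forall>j<n. \<bar>Mi $$ (i,j)\<bar> \<le> K)) \<and>
     bounded_mat_fun (mderiv M)"

text \<open>f : R x R^n x R^m -> R^n continuous (w.r.t. the l1 distance, equivalent to the
  Euclidean one) and bounded.\<close>
definition vdist1 :: "real vec \<Rightarrow> real vec \<Rightarrow> real" where
  "vdist1 x y = (\<Sum>i<dim_vec x. \<bar>x $ i - y $ i\<bar>)"

definition cont_bounded_rhs :: "nat \<Rightarrow> nat \<Rightarrow> (real \<Rightarrow> real vec \<Rightarrow> real vec \<Rightarrow> real vec) \<Rightarrow> bool" where
  "cont_bounded_rhs n m f \<longleftrightarrow>
     (\<forall>t. \<forall>x\<in>carrier_vec n. \<forall>u\<in>carrier_vec m. f t x u \<in> carrier_vec n) \<and>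
     (\<exists>K. \<forall>t. \<forall>x\<in>carrier_vec n. \<forall>u\<in>carrier_vec m. \<forall>i<n. \<bar>f t x u $ i\<bar> \<le> K) \<and>
     (\<forall>t. \<forall>x\<in>carrier_vec n. \<forall>u\<in>carrier_vec m. \<forall>\<epsilon>>0. \<exists>\<delta>>0.
        \<forall>t'. \<forall>x'\<in>carrier_vec n. \<forall>u'\<in>carrier_vec m.
          \<bar>t' - t\<bar> + vdist1 x' x + vdist1 u' u < \<delta> \<longrightarrow> vdist1 (f t' x' u') (f t x u) < \<epsilon>)"

definition P1 :: "nat \<Rightarrow> nat \<Rightarrow> nat \<Rightarrow> real mat \<Rightarrow> (real \<Rightarrow> real mat) \<Rightarrow> bool" where
  "P1 n m p B L \<longleftrightarrow> smooth_mat_fun m m L \<and>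
     (\<forall>k\<le>n. bounded_mat_fun (mderiv_n k L)) \<and>
     (\<exists>q::nat. q \<ge> p \<and> (\<forall>t. mrank (B * L t) = q))"

definition P2 :: "nat \<Rightarrow> nat \<Rightarrow> nat \<Rightarrow> real mat \<Rightarrow> real mat \<Rightarrow> real mat
    \<Rightarrow> (real \<Rightarrow> real vec \<Rightarrow> real vec \<Rightarrow> real vec) \<Rightarrow> (real \<Rightarrow> real mat) \<Rightarrow> nat \<Rightarrow> bool" where
  "P2 n m p A B C f L r \<longleftrightarrow>
     (\<forall>k. k + 2 \<le> r \<longrightarrow>
        (\<forall>t. C * A ^\<^sub>m k * B * L t = 0\<^sub>m p m) \<and>
        (\<forall>t. \<forall>x\<in>carrier_vec n. \<forall>u\<in>carrier_vec m. C * A ^\<^sub>m k *\<^sub>v f t x u = 0\<^sub>v p)) \<and>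
     (\<forall>t. mrank (C * A ^\<^sub>m (r - 1) * B * L t) = p)"

text \<open>calB(t) = [BL, (d/dt-A)(BL), ..., (d/dt-A)^(r-1)(BL)] in R^(n x rm).\<close>
definition calB :: "nat \<Rightarrow> nat \<Rightarrow> real mat \<Rightarrow> real mat \<Rightarrow> (real \<Rightarrow> real mat) \<Rightarrow> nat \<Rightarrow> real \<Rightarrow> real mat" where
  "calB n m A B L r t = mat n (r * m)
     (\<lambda>(i,j). ((DA A ^^ (j div m)) (\<lambda>s. B * L s) t) $$ (i, j mod m))"

text \<open>calC = [C; CA; ...; CA^(r-1)] in R^(rp x n).\<close>
definition calC :: "nat \<Rightarrow> nat \<Rightarrow> real mat \<Rightarrow> real mat \<Rightarrow> nat \<Rightarrow> real mat" where
  "calC n p A C r = mat (r * p) n (\<lambda>(i,j). (C * A ^\<^sub>m (i div p)) $$ (i mod p, j))"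

definition kernel_basis :: "nat \<Rightarrow> real mat \<Rightarrow> real mat \<Rightarrow> bool" where
  "kernel_basis n CC V \<longleftrightarrow> V \<in> carrier_mat n (n - mrank CC) \<and>
     {V *\<^sub>v x | x. x \<in> carrier_vec (n - mrank CC)} = {y \<in> carrier_vec n. CC *\<^sub>v y = 0\<^sub>v (dim_row CC)}"

definition calN :: "nat \<Rightarrow> real mat \<Rightarrow> real mat \<Rightarrow> (real \<Rightarrow> real mat) \<Rightarrow> real \<Rightarrow> real mat" where
  "calN n V CC BB t = pinv V * (1\<^sub>m n - BB t * pinv (CC * BB t) * CC)"

text \<open>U(t) = [calC; calN(t)] (vertical stacking).\<close>
definition calU :: "nat \<Rightarrow> real mat \<Rightarrow> real mat \<Rightarrow> (real \<Rightarrow> real mat) \<Rightarrow> real \<Rightarrow> real mat" where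
  "calU n V CC BB t = mat (dim_row CC + (n - mrank CC)) n
     (\<lambda>(i,j). if i < dim_row CC then CC $$ (i,j) else calN n V CC BB t $$ (i - dim_row CC, j))"


definition data_hyps :: "nat \<Rightarrow> nat \<Rightarrow> nat \<Rightarrow> real mat \<Rightarrow> real mat \<Rightarrow> real mat
    \<Rightarrow> (real \<Rightarrow> real vec \<Rightarrow> real vec \<Rightarrow> real vec) \<Rightarrow> (real \<Rightarrow> real mat) \<Rightarrow> nat \<Rightarrow> bool" where
  "data_hyps n m p A B C f L r \<longleftrightarrow> m \<ge> p \<and>
     A \<in> carrier_mat n n \<and> B \<in> carrier_mat n m \<and> C \<in> carrier_mat p n \<and>
     cont_bounded_rhs n m f \<and> P1 n m p B L \<and> P2 n m p A B C f L r"

definition det_cond :: "nat \<Rightarrow> nat \<Rightarrow> nat \<Rightarrow> real mat \<Rightarrow> real mat \<Rightarrow> real mat \<Rightarrow> (real \<Rightarrow> real mat) \<Rightarrow> nat \<Rightarrow> bool" where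
  "det_cond n m p A B C L r \<longleftrightarrow> (\<exists>\<alpha>>0. \<forall>t.
     det (calC n p A C r * calB n m A B L r t * transpose_mat (calC n p A C r * calB n m A B L r t)) \<ge> \<alpha>)"

end

theory Submission
  imports Defs
begin

definition bnd :: "(real \<Rightarrow> real) \<Rightarrow> bool" where
  "bnd f \<longleftrightarrow> (\<exists>K. \<forall>t. \<bar>f t\<bar> \<le> K)"

definition nice :: "(real \<Rightarrow> real) \<Rightarrow> bool" where
  "nice f \<longleftrightarrow> (\<forall>t. f differentiable (at t)) \<and> continuous_on UNIV (deriv f) \<and> bnd f \<and> bnd (deriv f)"

lemma bnd_const: "bnd (\<lambda>t. c)" unfolding bnd_def by auto

lemma bnd_add: "bnd f \<Longrightarrow> bnd g \<Longrightarrow> bnd (\<lambda>t. f t + g t)"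
  unfolding bnd_def
proof (elim exE)
  fix K1 K2 assume "\<forall>t. \<bar>f t\<bar> \<le> K1" "\<forall>t. \<bar>g t\<bar> \<le> K2"
  then show "\<exists>K. \<forall>t. \<bar>f t + g t\<bar> \<le> K"
    by (intro exI[of _ "K1+K2"]) (metis abs_triangle_ineq add_mono order_trans)
qed

lemma bnd_mult: "bnd f \<Longrightarrow> bnd g \<Longrightarrow> bnd (\<lambda>t. f t * g t)"
  unfolding bnd_def
proof (elim exE)
  fix K1 K2 assume a: "\<forall>t. \<bar>f t\<bar> \<le> K1" "\<forall>t. \<bar>g t\<bar> \<le> K2"
  show "\<exists>K. \<forall>t. \<bar>f t * g t\<bar> \<le> K"
  proof (intro exI allI)
    fix t
    have "\<bar>f t * g t\<bar> = \<bar>f t\<bar> * \<bar>g t\<bar>" by (simp add: abs_mult)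
    also have "\<dots> \<le> K1 * K2" using a by (meson abs_ge_zero mult_mono order_trans)
    finally show "\<bar>f t * g t\<bar> \<le> K1 * K2" .
  qed
qed

lemma bnd_uminus: "bnd f \<Longrightarrow> bnd (\<lambda>t. - f t)"
  unfolding bnd_def by simp

lemma diff_cont: "(\<forall>t. f differentiable (at t)) \<Longrightarrow> continuous_on UNIV f"
  by (meson continuous_at_imp_continuous_on differentiable_imp_continuous_within)

lemma dd: "\<forall>t. f differentiable (at t) \<Longrightarrow> (f has_real_derivative deriv f t) (at t)"
  using DERIV_deriv_iff_real_differentiable by blast

lemma deriv_fun_add: fixes f g :: "real \<Rightarrow> real"
  assumes a: "\<forall>t. f differentiable (at t)" "\<forall>t. g differentiable (at t)"
  shows "deriv (\<lambda>t. f t + g t) = (\<lambda>t. deriv f t + deriv g t)"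
proof (rule ext, rule DERIV_imp_deriv)
  fix t
  show "((\<lambda>t. f t + g t) has_real_derivative deriv f t + deriv g t) (at t)"
    using DERIV_add[OF dd[OF a(1)] dd[OF a(2)], of t] by simp
qed

lemma deriv_fun_mult: fixes f g :: "real \<Rightarrow> real"
  assumes a: "\<forall>t. f differentiable (at t)" "\<forall>t. g differentiable (at t)"
  shows "deriv (\<lambda>t. f t * g t) = (\<lambda>t. deriv f t * g t + f t * deriv g t)"
proof (rule ext, rule DERIV_imp_deriv)
  fix t
  show "((\<lambda>t. f t * g t) has_real_derivative deriv f t * g t + f t * deriv g t) (at t)"
    using DERIV_mult[OF dd[OF a(1)] dd[OF a(2)], of t] by (simp add: mult.commute)
qed

lemma deriv_fun_uminus: fixes f :: "real \<Rightarrow> real"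
  assumes a: "\<forall>t. f differentiable (at t)"
  shows "deriv (\<lambda>t. - f t) = (\<lambda>t. - deriv f t)"
proof (rule ext, rule DERIV_imp_deriv)
  fix t
  show "((\<lambda>t. - f t) has_real_derivative - deriv f t) (at t)"
    using DERIV_minus[OF dd[OF a(1)], of t] by simp
qed

lemma deriv_fun_const: "deriv (\<lambda>t. c::real) = (\<lambda>t. 0)"
  by (rule ext, rule DERIV_imp_deriv, intro derivative_intros)

lemma nice_const: "nice (\<lambda>t. c)"
  unfolding nice_def deriv_fun_const by (auto simp: bnd_const)

lemma nice_add: assumes "nice f" "nice g" shows "nice (\<lambda>t. f t + g t)"
  using assms unfolding nice_def
  by (auto simp: deriv_fun_add bnd_add intro!: continuous_on_add)

lemma nice_mult: assumes "nice f" "nice g" shows "nice (\<lambda>t. f t * g t)"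
  using assms unfolding nice_def
  by (auto simp: deriv_fun_mult bnd_add bnd_mult diff_cont intro!: continuous_on_add continuous_on_mult)

lemma nice_uminus: assumes "nice f" shows "nice (\<lambda>t. - f t)"
  using assms unfolding nice_def
  by (auto simp: deriv_fun_uminus bnd_uminus intro!: continuous_on_minus)

lemma nice_diff: assumes "nice f" "nice g" shows "nice (\<lambda>t. f t - g t)"
  using nice_add[OF assms(1) nice_uminus[OF assms(2)]] by simp

lemma nice_sum: "finite S \<Longrightarrow> (\<And>x. x \<in> S \<Longrightarrow> nice (f x)) \<Longrightarrow> nice (\<lambda>t. \<Sum>x\<in>S. f x t)"
  by (induction S rule: finite_induct) (auto intro: nice_add nice_const)

lemma nice_prod: "finite S \<Longrightarrow> (\<And>x. x \<in> S \<Longrightarrow> nice (f x)) \<Longrightarrow> nice (\<lambda>t. \<Prod>x\<in>S. f x t)"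
  by (induction S rule: finite_induct) (auto intro: nice_mult nice_const)

lemma nice_inverse: assumes "nice f" "\<And>t. f t \<ge> a" "a > 0"
  shows "nice (\<lambda>t. 1 / f t)"
proof -
  have pos: "f t \<noteq> 0" for t using assms(2)[of t] assms(3) by auto
  have d: "\<forall>t. f differentiable (at t)" using assms(1) unfolding nice_def by auto
  have der: "deriv (\<lambda>t. 1 / f t) = (\<lambda>t. - deriv f t / (f t)^2)"
  proof (rule ext, rule DERIV_imp_deriv)
    fix t
    show "((\<lambda>t. 1 / f t) has_real_derivative - deriv f t / (f t)^2) (at t)"
      using DERIV_inverse_fun[OF dd[OF d], of t] pos[of t]
      by (simp add: divide_inverse power2_eq_square mult.commute mult.left_commute)
  qed
  have dif: "\<forall>t. (\<lambda>t. 1 / f t) differentiable (at t)"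
    using d pos by (auto intro!: derivative_intros)
  have ct: "continuous_on UNIV (\<lambda>t. - deriv f t / (f t)^2)"
    using assms(1) d pos unfolding nice_def
    by (intro continuous_on_minus continuous_on_divide continuous_on_power diff_cont[OF d])
       (auto simp: nice_def)
  have b1: "bnd (\<lambda>t. 1 / f t)" unfolding bnd_def
  proof (intro exI allI)
    fix t have "\<bar>1 / f t\<bar> = 1 / f t" using assms(2)[of t] assms(3) by auto
    also have "\<dots> \<le> 1 / a" using assms(2)[of t] assms(3) by (simp add: frac_le)
    finally show "\<bar>1 / f t\<bar> \<le> 1 / a" .
  qed
  obtain K where K: "\<forall>t. \<bar>deriv f t\<bar> \<le> K" using assms(1) unfolding nice_def bnd_def by auto
  have b2: "bnd (\<lambda>t. - deriv f t / (f t)^2)" unfolding bnd_def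
  proof (intro exI allI)
    fix t
    have ft: "f t \<ge> a" using assms(2) .
    have "(f t)^2 \<ge> a^2" using ft assms(3) by (simp add: power_mono)
    have "\<bar>- deriv f t / (f t)^2\<bar> = \<bar>deriv f t\<bar> / (f t)^2" by (simp add: abs_div)
    also have "\<dots> \<le> K / (f t)^2" using K by (simp add: divide_right_mono)
    also have "\<dots> \<le> K / a^2"
      using \<open>(f t)^2 \<ge> a^2\<close> assms(3) K
    proof -
      have "K \<ge> 0" using K abs_ge_zero order_trans by blast
      moreover have "a^2 > 0" using assms(3) by simp
      ultimately show ?thesis using \<open>(f t)^2 \<ge> a^2\<close> divide_left_mono[of "a^2" "(f t)^2" K]
        using pos[of t] by (simp add: mult_pos_pos)
    qed
    finally show "\<bar>- deriv f t / (f t)^2\<bar> \<le> K / a^2" .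
  qed
  show ?thesis unfolding nice_def der using dif ct b1 b2 by auto
qed

lemma nice_bnd: "nice f \<Longrightarrow> \<exists>K. \<forall>t. \<bar>f t\<bar> \<le> K"
  unfolding nice_def bnd_def by auto

definition sm :: "nat \<Rightarrow> (real \<Rightarrow> real) \<Rightarrow> bool" where
  "sm d f \<longleftrightarrow> (\<forall>k t. (deriv ^^ k) f differentiable (at t)) \<and> (\<forall>k\<le>d. bnd ((deriv ^^ k) f))"

lemma deriv_fun_lin: fixes f g :: "real \<Rightarrow> real"
  assumes a: "\<forall>t. f differentiable (at t)" "\<forall>t. g differentiable (at t)"
  shows "deriv (\<lambda>t. a * f t + b * g t) = (\<lambda>t. a * deriv f t + b * deriv g t)"
proof (rule ext, rule DERIV_imp_deriv)
  fix t
  have "((\<lambda>t. a * f t + b * g t) has_real_derivative a * deriv f t + b * deriv g t) (at t)"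
    using DERIV_add[OF DERIV_cmult[OF dd[OF a(1)]] DERIV_cmult[OF dd[OF a(2)]]] by simp
  then show "((\<lambda>t. a * f t + b * g t) has_real_derivative a * deriv f t + b * deriv g t) (at t)" .
qed

lemma funpow_deriv_lin: fixes f g :: "real \<Rightarrow> real"
  assumes "\<forall>k t. (deriv ^^ k) f differentiable (at t)" "\<forall>k t. (deriv ^^ k) g differentiable (at t)"
  shows "(deriv ^^ k) (\<lambda>t. a * f t + b * g t) = (\<lambda>t. a * (deriv ^^ k) f t + b * (deriv ^^ k) g t)"
proof (induction k)
  case 0 then show ?case by simp
next
  case (Suc k)
  have "(deriv ^^ Suc k) (\<lambda>t. a * f t + b * g t) = deriv ((deriv ^^ k) (\<lambda>t. a * f t + b * g t))" by simp
  also have "\<dots> = deriv (\<lambda>t. a * (deriv ^^ k) f t + b * (deriv ^^ k) g t)" using Suc by simp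
  also have "\<dots> = (\<lambda>t. a * deriv ((deriv ^^ k) f) t + b * deriv ((deriv ^^ k) g) t)"
    by (rule deriv_fun_lin) (use assms in auto)
  finally show ?case by simp
qed

lemma sm_lin: assumes "sm d f" "sm d g" shows "sm d (\<lambda>t. a * f t + b * g t)"
proof -
  have e: "(deriv ^^ k) (\<lambda>t. a * f t + b * g t) = (\<lambda>t. a * (deriv ^^ k) f t + b * (deriv ^^ k) g t)" for k
    using funpow_deriv_lin assms unfolding sm_def by blast
  have "(\<lambda>t. a * (deriv ^^ k) f t + b * (deriv ^^ k) g t) differentiable (at t)" for k t
    using assms unfolding sm_def by (intro derivative_intros) auto
  moreover have "bnd (\<lambda>t. a * (deriv ^^ k) f t + b * (deriv ^^ k) g t)" if "k \<le> d" for k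
    using assms that unfolding sm_def by (intro bnd_add bnd_mult bnd_const) auto
  ultimately show ?thesis unfolding sm_def e by auto
qed

lemma sm_zero: "sm d (\<lambda>t. 0)"
proof -
  have e: "(deriv ^^ k) (\<lambda>t. 0::real) = (\<lambda>t. 0)" for k
    by (induction k) (auto simp: deriv_fun_const)
  show ?thesis unfolding sm_def e by (auto simp: bnd_const)
qed

lemma sm_add: "sm d f \<Longrightarrow> sm d g \<Longrightarrow> sm d (\<lambda>t. f t + g t)"
  using sm_lin[of d f g 1 1] by simp

lemma sm_diff: "sm d f \<Longrightarrow> sm d g \<Longrightarrow> sm d (\<lambda>t. f t - g t)"
  using sm_lin[of d f g 1 "-1"] by simp

lemma sm_cmult: "sm d f \<Longrightarrow> sm d (\<lambda>t. c * f t)"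
  using sm_lin[of d f f c 0] by simp

lemma sm_sum: "finite S \<Longrightarrow> (\<And>x. x \<in> S \<Longrightarrow> sm d (f x)) \<Longrightarrow> sm d (\<lambda>t. \<Sum>x\<in>S. f x t)"
  by (induction S rule: finite_induct) (auto intro: sm_add sm_zero)

lemma sm_mono: "sm d f \<Longrightarrow> d' \<le> d \<Longrightarrow> sm d' f"
  unfolding sm_def by auto

lemma sm_deriv: assumes "sm (Suc d) f" shows "sm d (deriv f)"
proof -
  have e: "(deriv ^^ k) (deriv f) = (deriv ^^ Suc k) f" for k
    by (simp only: funpow_Suc_right o_def)
  show ?thesis using assms unfolding sm_def e by (metis Suc_le_mono)
qed

lemma sm_nice: assumes "sm (Suc d) f" shows "nice f"
proof -
  have d0: "\<forall>t. f differentiable (at t)" using assms unfolding sm_def by (metis funpow_0)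
  have d1: "\<forall>t. deriv f differentiable (at t)" using assms unfolding sm_def
    by (metis funpow_0 funpow_Suc_right o_apply)
  have b0: "bnd f" using assms unfolding sm_def by (metis funpow_0 le0)
  have b1: "bnd (deriv f)" using assms unfolding sm_def
    by (metis One_nat_def Suc_le_mono funpow_0 funpow_Suc_right le0 o_apply)
  show ?thesis unfolding nice_def using d0 d1 b0 b1 diff_cont by blast
qed

lemma DA_iter:
  assumes L: "smooth_mat_fun m m L" and Lb: "\<forall>k\<le>n. bounded_mat_fun (mderiv_n k L)"
    and B: "B \<in> carrier_mat n m" and A: "A \<in> carrier_mat n n"
  shows "k \<le> n \<Longrightarrow> (\<forall>t. (DA A ^^ k) (\<lambda>s. B * L s) t \<in> carrier_mat n m) \<and>
          (\<forall>i<n. \<forall>j<m. sm (n - k) (\<lambda>t. (DA A ^^ k) (\<lambda>s. B * L s) t $$ (i,j)))"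
proof (induction k)
  case 0
  have Lc: "L t \<in> carrier_mat m m" for t using L unfolding smooth_mat_fun_def by auto
  have smL: "sm n (\<lambda>t. L t $$ (i,j))" if "i < m" "j < m" for i j
  proof -
    have "(deriv ^^ k) (\<lambda>s. L s $$ (i,j)) differentiable (at t)" for k t
      using L that unfolding smooth_mat_fun_def by auto
    moreover have "bnd ((deriv ^^ k) (\<lambda>s. L s $$ (i,j)))" if "k \<le> n" for k
    proof -
      have "bounded_mat_fun (mderiv_n k L)" using Lb that by auto
      then obtain K where K: "\<forall>t i j. i < dim_row (mderiv_n k L t) \<longrightarrow> j < dim_col (mderiv_n k L t) \<longrightarrow>
          \<bar>mderiv_n k L t $$ (i,j)\<bar> \<le> K"
        unfolding bounded_mat_fun_def by blast
      have "\<bar>(deriv ^^ k) (\<lambda>s. L s $$ (i,j)) t\<bar> \<le> K" for t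
        using K[rule_format, of i t j] \<open>i<m\<close> \<open>j<m\<close> Lc[of t] unfolding mderiv_n_def by auto
      then show ?thesis unfolding bnd_def by blast
    qed
    ultimately show ?thesis unfolding sm_def by auto
  qed
  have "sm n (\<lambda>t. (B * L t) $$ (i,j))" if "i < n" "j < m" for i j
  proof -
    have e: "(B * L t) $$ (i,j) = (\<Sum>l\<in>{0..<m}. B $$ (i,l) * L t $$ (l,j))" for t
      using that B Lc[of t] by (auto simp: scalar_prod_def)
    show ?thesis unfolding e
      by (rule sm_sum) (auto intro!: sm_cmult smL \<open>j < m\<close>)
  qed
  then show ?case using B Lc by auto
next
  case (Suc k)
  let ?M = "(DA A ^^ k) (\<lambda>s. B * L s)"
  from Suc have IH: "\<forall>t. ?M t \<in> carrier_mat n m" "\<forall>i<n. \<forall>j<m. sm (n - k) (\<lambda>t. ?M t $$ (i,j))" by auto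
  have e: "(DA A ^^ Suc k) (\<lambda>s. B * L s) = DA A ?M" by simp
  have c: "DA A ?M t \<in> carrier_mat n m" for t
    using IH(1)[rule_format, of t] A unfolding DA_def mderiv_def by auto
  have "sm (n - Suc k) (\<lambda>t. DA A ?M t $$ (i,j))" if "i < n" "j < m" for i j
  proof -
    have e2: "DA A ?M t $$ (i,j) = deriv (\<lambda>s. ?M s $$ (i,j)) t - (\<Sum>l\<in>{0..<n}. A $$ (i,l) * ?M t $$ (l,j))" for t
      using that A IH(1)[rule_format, of t] unfolding DA_def mderiv_def by (auto simp: scalar_prod_def)
    have nk: "n - k = Suc (n - Suc k)" using Suc by auto
    show ?thesis unfolding e2
      apply (rule sm_diff)
       apply (rule sm_deriv) using IH(2) that nk apply metis
      apply (rule sm_sum) apply simp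
      apply (rule sm_cmult) apply (rule sm_mono[of "n-k"]) using IH(2) that by auto
  qed
  then show ?case unfolding e using c by auto
qed

definition niceM :: "nat \<Rightarrow> nat \<Rightarrow> (real \<Rightarrow> real mat) \<Rightarrow> bool" where
  "niceM a b M \<longleftrightarrow> (\<forall>t. M t \<in> carrier_mat a b) \<and> (\<forall>i<a. \<forall>j<b. nice (\<lambda>t. M t $$ (i,j)))"

lemma niceM_const: "X \<in> carrier_mat a b \<Longrightarrow> niceM a b (\<lambda>t. X)"
  unfolding niceM_def by (auto intro: nice_const)

lemma niceM_carrier: "niceM a b M \<Longrightarrow> M t \<in> carrier_mat a b"
  unfolding niceM_def by auto

lemma niceM_nice: "niceM a b M \<Longrightarrow> i < a \<Longrightarrow> j < b \<Longrightarrow> nice (\<lambda>t. M t $$ (i,j))"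
  unfolding niceM_def by auto

lemma niceM_mult: assumes "niceM a b M" "niceM b c N" shows "niceM a c (\<lambda>t. M t * N t)"
proof -
  have cM: "M t \<in> carrier_mat a b" and cN: "N t \<in> carrier_mat b c" for t
    using assms niceM_carrier by blast+
  have "nice (\<lambda>t. (M t * N t) $$ (i,j))" if "i < a" "j < c" for i j
  proof -
    have e: "(M t * N t) $$ (i,j) = (\<Sum>l\<in>{0..<b}. M t $$ (i,l) * N t $$ (l,j))" for t
      using that cM[of t] cN[of t] by (auto simp: scalar_prod_def)
    show ?thesis unfolding e
      by (rule nice_sum) (use that assms in \<open>auto intro!: nice_mult niceM_nice\<close>)
  qed
  then show ?thesis unfolding niceM_def using cM cN mult_carrier_mat by blast
qed

lemma niceM_add: assumes "niceM a b M" "niceM a b N" shows "niceM a b (\<lambda>t. M t + N t)"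
proof -
  have cM: "M t \<in> carrier_mat a b" and cN: "N t \<in> carrier_mat a b" for t
    using assms niceM_carrier by blast+
  have "nice (\<lambda>t. (M t + N t) $$ (i,j))" if "i < a" "j < b" for i j
  proof -
    have e: "(M t + N t) $$ (i,j) = M t $$ (i,j) + N t $$ (i,j)" for t
      using that cM[of t] cN[of t] by auto
    show ?thesis unfolding e by (intro nice_add niceM_nice[OF assms(1)] niceM_nice[OF assms(2)] that)
  qed
  then show ?thesis unfolding niceM_def using cM cN add_carrier_mat by blast
qed

lemma niceM_minus: assumes "niceM a b M" "niceM a b N" shows "niceM a b (\<lambda>t. M t - N t)"
proof -
  have cM: "M t \<in> carrier_mat a b" and cN: "N t \<in> carrier_mat a b" for t
    using assms niceM_carrier by blast+
  have "nice (\<lambda>t. (M t - N t) $$ (i,j))" if "i < a" "j < b" for i j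
  proof -
    have e: "(M t - N t) $$ (i,j) = M t $$ (i,j) - N t $$ (i,j)" for t
      using that cM[of t] cN[of t] by auto
    show ?thesis unfolding e by (intro nice_diff niceM_nice[OF assms(1)] niceM_nice[OF assms(2)] that)
  qed
  then show ?thesis unfolding niceM_def using cM cN minus_carrier_mat by blast
qed

lemma niceM_transpose: assumes "niceM a b M" shows "niceM b a (\<lambda>t. transpose_mat (M t))"
proof -
  have cM: "M t \<in> carrier_mat a b" for t using assms niceM_carrier by blast
  have "nice (\<lambda>t. (transpose_mat (M t)) $$ (i,j))" if "i < b" "j < a" for i j
  proof -
    have e: "(transpose_mat (M t)) $$ (i,j) = M t $$ (j,i)" for t
      using that cM[of t] by auto
    show ?thesis unfolding e by (intro niceM_nice[OF assms(1)] that)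
  qed
  then show ?thesis unfolding niceM_def using cM transpose_carrier_mat by blast
qed

lemma niceM_smult: assumes "nice g" "niceM a b M" shows "niceM a b (\<lambda>t. g t \<cdot>\<^sub>m M t)"
proof -
  have cM: "M t \<in> carrier_mat a b" for t using assms niceM_carrier by blast
  have "nice (\<lambda>t. (g t \<cdot>\<^sub>m M t) $$ (i,j))" if "i < a" "j < b" for i j
  proof -
    have e: "(g t \<cdot>\<^sub>m M t) $$ (i,j) = g t * M t $$ (i,j)" for t
      using that cM[of t] by auto
    show ?thesis unfolding e by (intro nice_mult assms(1) niceM_nice[OF assms(2)] that)
  qed
  then show ?thesis unfolding niceM_def using cM smult_carrier_mat by blast
qed

lemma nice_det: assumes "niceM a a M" shows "nice (\<lambda>t. det (M t))"
proof -
  have cM: "M t \<in> carrier_mat a a" for t using assms niceM_carrier by blast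
  have e: "det (M t) = (\<Sum>p\<in>{p. p permutes {0..<a}}. of_int (sign p) * (\<Prod>i\<in>{0..<a}. M t $$ (i, p i)))" for t
    using cM[of t] unfolding det_def by auto
  show ?thesis unfolding e
  proof (rule nice_sum)
    show "finite {p. p permutes {0..<a}}" by (simp add: finite_permutations)
    fix p assume p: "p \<in> {p. p permutes {0..<a}}"
    have "p i < a" if "i < a" for i using p that by (simp add: permutes_in_image)
    then show "nice (\<lambda>t. of_int (sign p) * (\<Prod>i\<in>{0..<a}. M t $$ (i, p i)))"
      by (intro nice_mult nice_const nice_prod) (auto intro: niceM_nice[OF assms])
  qed
qed

lemma niceM_delete: assumes "niceM a a M" "i < a" "j < a"
  shows "niceM (a - 1) (a - 1) (\<lambda>t. mat_delete (M t) i j)"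
proof -
  have cM: "M t \<in> carrier_mat a a" for t using assms niceM_carrier by blast
  have "nice (\<lambda>t. mat_delete (M t) i j $$ (k,l))" if "k < a - 1" "l < a - 1" for k l
  proof -
    have e: "mat_delete (M t) i j $$ (k,l) = M t $$ (insert_index i k, insert_index j l)" for t
      using that cM[of t] unfolding mat_delete_def insert_index_def by auto
    show ?thesis unfolding e
      by (rule niceM_nice[OF assms(1)]) (use that in \<open>auto simp: insert_index_def\<close>)
  qed
  moreover have "mat_delete (M t) i j \<in> carrier_mat (a - 1) (a - 1)" for t
    using cM[of t] unfolding mat_delete_def by auto
  ultimately show ?thesis unfolding niceM_def by blast
qed

lemma niceM_adj: assumes "niceM a a M" shows "niceM a a (\<lambda>t. adj_mat (M t))"
proof -
  have cM: "M t \<in> carrier_mat a a" for t using assms niceM_carrier by blast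
  have "nice (\<lambda>t. adj_mat (M t) $$ (i,j))" if "i < a" "j < a" for i j
  proof -
    have e: "adj_mat (M t) $$ (i,j) = (-1)^(j+i) * det (mat_delete (M t) j i)" for t
      using that cM[of t] unfolding adj_mat_def cofactor_def by auto
    have "nice (\<lambda>t. det (mat_delete (M t) j i))"
      by (rule nice_det[OF niceM_delete[OF assms]]) (use that in auto)
    then show ?thesis unfolding e by (intro nice_mult nice_const)
  qed
  then show ?thesis unfolding niceM_def using cM adj_mat(1) by blast
qed

lemma niceM_bnd: assumes "niceM a b M" shows "\<exists>K. \<forall>t i j. i < a \<longrightarrow> j < b \<longrightarrow> \<bar>M t $$ (i,j)\<bar> \<le> K"
proof -
  have "\<forall>x\<in>{0..<a}\<times>{0..<b}. \<exists>K. \<forall>t. \<bar>M t $$ x\<bar> \<le> K"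
    using assms unfolding niceM_def nice_def bnd_def by auto
  then obtain Kf where Kf: "\<forall>x\<in>{0..<a}\<times>{0..<b}. \<forall>t. \<bar>M t $$ x\<bar> \<le> Kf x" by metis
  have "\<bar>M t $$ (i,j)\<bar> \<le> (\<Sum>x\<in>{0..<a}\<times>{0..<b}. \<bar>Kf x\<bar>)" if "i < a" "j < b" for t i j
  proof -
    have "(i,j) \<in> {0..<a}\<times>{0..<b}" using that by auto
    then have "\<bar>M t $$ (i,j)\<bar> \<le> Kf (i,j)" using Kf by blast
    then have "\<bar>M t $$ (i,j)\<bar> \<le> \<bar>Kf (i,j)\<bar>" by linarith
    also have "\<dots> \<le> (\<Sum>x\<in>{0..<a}\<times>{0..<b}. \<bar>Kf x\<bar>)"
      by (rule member_le_sum) (use that in auto)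
    finally show ?thesis .
  qed
  then show ?thesis by blast
qed

lemma niceM_deriv_bnd: assumes "niceM a b M"
  shows "\<exists>K. \<forall>t i j. i < a \<longrightarrow> j < b \<longrightarrow> \<bar>deriv (\<lambda>s. M s $$ (i,j)) t\<bar> \<le> K"
proof -
  define D where "D = (\<lambda>t. mat a b (\<lambda>(i,j). deriv (\<lambda>s. M s $$ (i,j)) t))"
  have "\<forall>x\<in>{0..<a}\<times>{0..<b}. \<exists>K. \<forall>t. \<bar>D t $$ x\<bar> \<le> K"
    using assms unfolding niceM_def nice_def bnd_def D_def by auto
  then obtain Kf where Kf: "\<forall>x\<in>{0..<a}\<times>{0..<b}. \<forall>t. \<bar>D t $$ x\<bar> \<le> Kf x" by metis
  have "\<bar>deriv (\<lambda>s. M s $$ (i,j)) t\<bar> \<le> (\<Sum>x\<in>{0..<a}\<times>{0..<b}. \<bar>Kf x\<bar>)" if "i < a" "j < b" for t i j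
  proof -
    have "\<bar>deriv (\<lambda>s. M s $$ (i,j)) t\<bar> = \<bar>D t $$ (i,j)\<bar>" using that unfolding D_def by auto
    also have "\<dots> \<le> \<bar>Kf (i,j)\<bar>"
    proof -
      have "(i,j) \<in> {0..<a}\<times>{0..<b}" using that by auto
      then have "\<bar>D t $$ (i,j)\<bar> \<le> Kf (i,j)" using Kf by blast
      then show ?thesis by linarith
    qed
    also have "\<dots> \<le> (\<Sum>x\<in>{0..<a}\<times>{0..<b}. \<bar>Kf x\<bar>)"
      by (rule member_le_sum) (use that in auto)
    finally show ?thesis .
  qed
  then show ?thesis by blast
qed

lemma penrose_unique:
  fixes M X Y :: "real mat"
  assumes M: "M \<in> carrier_mat a b" and X: "X \<in> carrier_mat b a" and Y: "Y \<in> carrier_mat b a"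
    and x1: "M * X * M = M" and x2: "X * M * X = X" and x3: "transpose_mat (M * X) = M * X"
    and x4: "transpose_mat (X * M) = X * M"
    and y1: "M * Y * M = M" and y2: "Y * M * Y = Y" and y3: "transpose_mat (M * Y) = M * Y"
    and y4: "transpose_mat (Y * M) = Y * M"
  shows "X = Y"
proof -
  have MX: "M * X \<in> carrier_mat a a" and XM: "X * M \<in> carrier_mat b b"
    and MY: "M * Y \<in> carrier_mat a a" and YM: "Y * M \<in> carrier_mat b b"
    using M X Y by auto
  have MT: "transpose_mat M \<in> carrier_mat b a" and XT: "transpose_mat X \<in> carrier_mat a b"
    and YT: "transpose_mat Y \<in> carrier_mat a b" using M X Y by auto
  have MT1: "transpose_mat M = transpose_mat M * (M * Y)"
  proof -
    have "transpose_mat M = transpose_mat (M * Y * M)" using y1 by simp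
    also have "\<dots> = transpose_mat M * transpose_mat (M * Y)" by (rule transpose_mult[OF MY M])
    finally show ?thesis using y3 by simp
  qed
  have MT2: "transpose_mat M = (X * M) * transpose_mat M"
  proof -
    have "transpose_mat M = transpose_mat (M * (X * M))" using x1 assoc_mult_mat[OF M X M] by simp
    also have "\<dots> = transpose_mat (X * M) * transpose_mat M" by (rule transpose_mult[OF M XM])
    finally show ?thesis using x4 by simp
  qed
  have e1: "X = X * (M * Y)"
  proof -
    have "X = X * (M * X)" using x2 assoc_mult_mat[OF X M X] by simp
    also have "\<dots> = X * (transpose_mat X * transpose_mat M)" using x3 transpose_mult[OF M X] by simp
    also have "\<dots> = X * (transpose_mat X * (transpose_mat M * (M * Y)))" using MT1 by simp
    also have "\<dots> = X * ((transpose_mat X * transpose_mat M) * (M * Y))"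
      using assoc_mult_mat[OF XT MT MY] by simp
    also have "\<dots> = X * ((M * X) * (M * Y))" using x3 transpose_mult[OF M X] by simp
    also have "\<dots> = (X * (M * X)) * (M * Y)" using assoc_mult_mat[OF X MX MY] by simp
    also have "\<dots> = X * (M * Y)" using x2 assoc_mult_mat[OF X M X] by simp
    finally show ?thesis .
  qed
  have e2: "Y = (X * M) * Y"
  proof -
    have "Y = (Y * M) * Y" using y2 by simp
    also have "\<dots> = (transpose_mat M * transpose_mat Y) * Y" using y4 transpose_mult[OF Y M] by simp
    also have "\<dots> = (((X * M) * transpose_mat M) * transpose_mat Y) * Y" using MT2 by simp
    also have "\<dots> = ((X * M) * (transpose_mat M * transpose_mat Y)) * Y"
      using assoc_mult_mat[OF XM MT YT] by simp
    also have "\<dots> = ((X * M) * (Y * M)) * Y" using y4 transpose_mult[OF Y M] by simp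
    also have "\<dots> = (X * M) * ((Y * M) * Y)" using assoc_mult_mat[OF XM YM Y] by simp
    also have "\<dots> = (X * M) * Y" using y2 by simp
    finally show ?thesis .
  qed
  have "X = X * (M * Y)" by (rule e1)
  also have "\<dots> = X * M * Y" by (rule assoc_mult_mat[OF X M Y, symmetric])
  also have "\<dots> = Y" by (rule e2[symmetric])
  finally show ?thesis .
qed

lemma pinv_eq:
  fixes M X :: "real mat"
  assumes M: "M \<in> carrier_mat a b" and X: "X \<in> carrier_mat b a"
    and x1: "M * X * M = M" and x2: "X * M * X = X" and x3: "transpose_mat (M * X) = M * X"
    and x4: "transpose_mat (X * M) = X * M"
  shows "pinv M = X"
  unfolding pinv_def
proof (rule the_equality)
  show "X \<in> carrier_mat (dim_col M) (dim_row M) \<and> M * X * M = M \<and> X * M * X = X \<and>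
    transpose_mat (M * X) = M * X \<and> transpose_mat (X * M) = X * M"
    using assms by auto
  fix Y assume "Y \<in> carrier_mat (dim_col M) (dim_row M) \<and> M * Y * M = M \<and> Y * M * Y = Y \<and>
    transpose_mat (M * Y) = M * Y \<and> transpose_mat (Y * M) = Y * M"
  then have Yc: "Y \<in> carrier_mat b a" and y1: "M * Y * M = M" and y2: "Y * M * Y = Y"
    and y3: "transpose_mat (M * Y) = M * Y" and y4: "transpose_mat (Y * M) = Y * M"
    using M by auto
  show "Y = X" by (rule penrose_unique[OF M Yc X y1 y2 y3 y4 x1 x2 x3 x4])
qed

lemma sym_inverse:
  fixes G Gi :: "real mat"
  assumes G: "G \<in> carrier_mat a a" and Gi: "Gi \<in> carrier_mat a a"
    and s: "transpose_mat G = G" and inv1: "G * Gi = 1\<^sub>m a" and inv2: "Gi * G = 1\<^sub>m a"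
  shows "transpose_mat Gi = Gi"
proof -
  have GiT: "transpose_mat Gi \<in> carrier_mat a a" using Gi by simp
  have "transpose_mat Gi = transpose_mat Gi * (G * Gi)" using inv1 GiT by simp
  also have "\<dots> = (transpose_mat Gi * transpose_mat G) * Gi" using s assoc_mult_mat[OF GiT G Gi] by simp
  also have "\<dots> = transpose_mat (G * Gi) * Gi" using transpose_mult[OF G Gi] by simp
  also have "\<dots> = Gi" using inv1 Gi by simp
  finally show ?thesis .
qed

lemma pinv_row:
  fixes M Gi :: "real mat"
  assumes M: "M \<in> carrier_mat a b" and Gi: "Gi \<in> carrier_mat a a"
    and inv1: "(M * transpose_mat M) * Gi = 1\<^sub>m a" and inv2: "Gi * (M * transpose_mat M) = 1\<^sub>m a"
  shows "pinv M = transpose_mat M * Gi"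
proof -
  have MT: "transpose_mat M \<in> carrier_mat b a" using M by simp
  have G: "M * transpose_mat M \<in> carrier_mat a a" using M by simp
  have s: "transpose_mat (M * transpose_mat M) = M * transpose_mat M"
    using transpose_mult[OF M MT] by simp
  have GiS: "transpose_mat Gi = Gi" by (rule sym_inverse[OF G Gi s inv1 inv2])
  let ?X = "transpose_mat M * Gi"
  have X: "?X \<in> carrier_mat b a" using MT Gi by simp
  have MX: "M * ?X = 1\<^sub>m a" using assoc_mult_mat[OF M MT Gi] inv1 by simp
  show ?thesis
  proof (rule pinv_eq[OF M X])
    show "M * ?X * M = M" using MX M by simp
    show "?X * M * ?X = ?X" using assoc_mult_mat[OF X M X] MX right_mult_one_mat[OF X] by simp
    show "transpose_mat (M * ?X) = M * ?X" using MX by simp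
    show "transpose_mat (?X * M) = ?X * M"
    proof -
      have "transpose_mat (?X * M) = transpose_mat M * transpose_mat ?X" by (rule transpose_mult[OF X M])
      also have "transpose_mat ?X = transpose_mat Gi * M" using transpose_mult[OF MT Gi] by simp
      finally show ?thesis using GiS assoc_mult_mat[OF MT Gi M] by simp
    qed
  qed
qed

lemma pinv_col:
  fixes V Hi :: "real mat"
  assumes V: "V \<in> carrier_mat a b" and Hi: "Hi \<in> carrier_mat b b"
    and inv1: "(transpose_mat V * V) * Hi = 1\<^sub>m b" and inv2: "Hi * (transpose_mat V * V) = 1\<^sub>m b"
  shows "pinv V = Hi * transpose_mat V"
proof -
  have VT: "transpose_mat V \<in> carrier_mat b a" using V by simp
  have H: "transpose_mat V * V \<in> carrier_mat b b" using V by simp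
  have s: "transpose_mat (transpose_mat V * V) = transpose_mat V * V"
    using transpose_mult[OF VT V] by simp
  have HiS: "transpose_mat Hi = Hi" by (rule sym_inverse[OF H Hi s inv1 inv2])
  let ?X = "Hi * transpose_mat V"
  have X: "?X \<in> carrier_mat b a" using VT Hi by simp
  have XV: "?X * V = 1\<^sub>m b" using assoc_mult_mat[OF Hi VT V] inv2 by simp
  show ?thesis
  proof (rule pinv_eq[OF V X])
    show "V * ?X * V = V" using XV V assoc_mult_mat[OF V X V] by simp
    show "?X * V * ?X = ?X" using XV left_mult_one_mat[OF X] by simp
    show "transpose_mat (?X * V) = ?X * V" using XV by simp
    show "transpose_mat (V * ?X) = V * ?X"
    proof -
      have "transpose_mat (V * ?X) = transpose_mat ?X * transpose_mat V" by (rule transpose_mult[OF V X])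
      also have "transpose_mat ?X = V * transpose_mat Hi" using transpose_mult[OF Hi VT] by simp
      finally show ?thesis using HiS assoc_mult_mat[OF V Hi VT] by simp
    qed
  qed
qed

context vec_space begin

lemma mult_in_span_cols: assumes A: "A \<in> carrier_mat n nc" and v: "v \<in> carrier_vec nc"
  shows "A *\<^sub>v v \<in> span (set (cols A))"
proof -
  have cs: "set (cols A) \<subseteq> carrier_vec n" using A cols_dim by blast
  have "\<forall>w \<in> set (cols A). dim_vec w = n" using cs by auto
  from lincomb_list_as_mat_mult[OF this, of "\<lambda>i. v $ i"]
  have e1: "lincomb_list (\<lambda>i. v $ i) (cols A) = mat_of_cols n (cols A) *\<^sub>v vec (length (cols A)) (\<lambda>i. v $ i)" .
  have e2: "mat_of_cols n (cols A) = A" using mat_of_cols_cols[of A] A by simp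
  have e3: "vec (length (cols A)) (\<lambda>i. v $ i) = v" using A v by (intro eq_vecI) auto
  have "lincomb_list (\<lambda>i. v $ i) (cols A) = A *\<^sub>v v" unfolding e1 e2 e3 ..
  moreover have "lincomb_list (\<lambda>i. v $ i) (cols A) \<in> span_list (cols A)"
    by (rule in_span_listI) (auto simp: class_field_def)
  ultimately have "A *\<^sub>v v \<in> span_list (cols A)" by simp
  then show ?thesis using span_list_as_span[OF cs] by simp
qed

lemma rank_mult_le: assumes A: "A \<in> carrier_mat n k" and B: "B \<in> carrier_mat k nc"
  shows "rank (A * B) \<le> rank A"
proof -
  define W1 where "W1 = span (set (cols A))"
  have csA: "set (cols A) \<subseteq> carrier_vec n" using A cols_dim by blast
  have AB: "A * B \<in> carrier_mat n nc" using A B by simp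
  have csAB: "set (cols (A * B)) \<subseteq> carrier_vec n" using AB cols_dim by blast
  have "set (cols (A * B)) \<subseteq> W1"
  proof
    fix x assume "x \<in> set (cols (A * B))"
    then obtain j where j: "j < nc" "x = col (A * B) j" using AB
      by (metis carrier_matD(2) cols_length cols_nth in_set_conv_nth)
    then have "x = A *\<^sub>v col B j" by (simp only: j(2) col_mult2[OF A B j(1)])
    then show "x \<in> W1" unfolding W1_def using mult_in_span_cols[OF A] B j by auto
  qed
  have sW1: "subspace class_ring W1 V" unfolding W1_def using csA span_is_subspace by simp
  then have sp: "span (set (cols (A * B))) \<subseteq> W1"
    using span_is_subset[OF \<open>set (cols (A * B)) \<subseteq> W1\<close>] unfolding subspace_def by blast
  have sAB: "subspace class_ring (span (set (cols (A * B)))) V" using csAB span_is_subspace by simp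
  have sub: "subspace class_ring (span (set (cols (A * B)))) (vs W1)"
    using nested_subspaces[OF sW1 sAB sp] .
  have fW1: "vectorspace.fin_dim class_ring (vs W1)" unfolding W1_def using fin_dim_span_cols[OF A] .
  have fAB: "vectorspace.fin_dim class_ring (vs (span (set (cols (A * B)))))" using fin_dim_span_cols[OF AB] .
  have vsX: "(vs W1)\<lparr>carrier := span (set (cols (A * B)))\<rparr> = vs (span (set (cols (A * B))))" by simp
  have d: "vectorspace.dim class_ring (vs (span (set (cols (A * B))))) \<le> vectorspace.dim class_ring (vs W1)"
    using vectorspace.subspace_dim[OF subspace_is_vs[OF sW1] sub fW1] fAB unfolding vsX by blast
  have r1: "rank (A * B) = vectorspace.dim class_ring (vs (span (set (cols (A * B)))))" unfolding rank_def by simp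
  have r2: "rank A = vectorspace.dim class_ring (vs W1)" unfolding rank_def W1_def by simp
  show ?thesis unfolding r1 r2 by (rule d)
qed

lemma rank_le_nr: assumes A: "A \<in> carrier_mat n nc" shows "rank A \<le> n"
proof -
  have csA: "set (cols A) \<subseteq> carrier_vec n" using A cols_dim by blast
  have s: "subspace class_ring (span (set (cols A))) V" using csA span_is_subspace by simp
  have "rank A \<le> dim" unfolding rank_def
    using subspace_dim[OF s fin_dim fin_dim_span_cols[OF A]] by simp
  then show ?thesis using dim_is_n by simp
qed

lemma rank_right_inv: assumes A: "A \<in> carrier_mat n k" and R: "R \<in> carrier_mat k n"
  and AR: "A * R = 1\<^sub>m n"
  shows "rank A = n"
proof -
  have "rank (1\<^sub>m n) = n" using det_rank_iff[of "1\<^sub>m n"] by simp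
  then have "n \<le> rank A" using rank_mult_le[OF A R] AR by simp
  then show ?thesis using rank_le_nr[OF A] by simp
qed

end

lemma mrank_right_inv: assumes A: "A \<in> carrier_mat n k" and R: "R \<in> carrier_mat k n"
  and AR: "A * R = 1\<^sub>m n"
  shows "mrank A = n"
  unfolding mrank_def using vec_space.rank_right_inv[OF A R AR] A by simp

lemma adj_inv:
  fixes G :: "real mat"
  assumes G: "G \<in> carrier_mat a a" and d: "det G \<noteq> 0"
  shows "G * ((1 / det G) \<cdot>\<^sub>m adj_mat G) = 1\<^sub>m a" "((1 / det G) \<cdot>\<^sub>m adj_mat G) * G = 1\<^sub>m a"
proof -
  have aC: "adj_mat G \<in> carrier_mat a a" using adj_mat(1)[OF G] .
  have "G * ((1 / det G) \<cdot>\<^sub>m adj_mat G) = (1 / det G) \<cdot>\<^sub>m (G * adj_mat G)"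
    by (rule mult_smult_distrib[OF G aC])
  also have "\<dots> = (1 / det G) \<cdot>\<^sub>m (det G \<cdot>\<^sub>m 1\<^sub>m a)" using adj_mat(2)[OF G] by simp
  also have "\<dots> = 1\<^sub>m a" using d by (intro eq_matI) auto
  finally show "G * ((1 / det G) \<cdot>\<^sub>m adj_mat G) = 1\<^sub>m a" .
  have "((1 / det G) \<cdot>\<^sub>m adj_mat G) * G = (1 / det G) \<cdot>\<^sub>m (adj_mat G * G)"
    by (rule mult_smult_assoc_mat[OF aC G])
  also have "\<dots> = (1 / det G) \<cdot>\<^sub>m (det G \<cdot>\<^sub>m 1\<^sub>m a)" using adj_mat(3)[OF G] by simp
  also have "\<dots> = 1\<^sub>m a" using d by (intro eq_matI) auto
  finally show "((1 / det G) \<cdot>\<^sub>m adj_mat G) * G = 1\<^sub>m a" .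
qed

definition stackm :: "nat \<Rightarrow> nat \<Rightarrow> real mat \<Rightarrow> real mat \<Rightarrow> real mat" where
  "stackm a c X Y = mat (a + c) (dim_col X) (\<lambda>(i,j). if i < a then X $$ (i,j) else Y $$ (i - a, j))"

definition concatm :: "nat \<Rightarrow> nat \<Rightarrow> real mat \<Rightarrow> real mat \<Rightarrow> real mat" where
  "concatm a c X Y = mat (dim_row X) (a + c) (\<lambda>(i,j). if j < a then X $$ (i,j) else Y $$ (i, j - a))"

lemma stack_concat_entry:
  assumes X: "X \<in> carrier_mat a k" and Y: "Y \<in> carrier_mat c k"
    and P: "P \<in> carrier_mat k a'" and Q: "Q \<in> carrier_mat k c'"
    and i: "i < a + c" and j: "j < a' + c'"
  shows "(stackm a c X Y * concatm a' c' P Q) $$ (i,j) =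
    (if i < a then (if j < a' then (X * P) $$ (i,j) else (X * Q) $$ (i, j - a'))
     else (if j < a' then (Y * P) $$ (i - a, j) else (Y * Q) $$ (i - a, j - a')))"
proof -
  have r: "row (stackm a c X Y) i = (if i < a then row X i else row Y (i - a))"
    using X Y i unfolding stackm_def by (intro eq_vecI) auto
  have cl: "col (concatm a' c' P Q) j = (if j < a' then col P j else col Q (j - a'))"
    using P Q j unfolding concatm_def by (intro eq_vecI) auto
  have "(stackm a c X Y * concatm a' c' P Q) $$ (i,j) = row (stackm a c X Y) i \<bullet> col (concatm a' c' P Q) j"
    using i j P X unfolding stackm_def concatm_def by simp
  also have "\<dots> = (if i < a then (if j < a' then (X * P) $$ (i,j) else (X * Q) $$ (i, j - a'))
     else (if j < a' then (Y * P) $$ (i - a, j) else (Y * Q) $$ (i - a, j - a')))"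
    unfolding r cl using X Y P Q i j by auto
  finally show ?thesis .
qed

lemma stack_concat_one:
  assumes X: "X \<in> carrier_mat a k" and Y: "Y \<in> carrier_mat c k"
    and P: "P \<in> carrier_mat k a" and Q: "Q \<in> carrier_mat k c"
    and XP: "X * P = 1\<^sub>m a" and XQ: "X * Q = 0\<^sub>m a c" and YP: "Y * P = 0\<^sub>m c a" and YQ: "Y * Q = 1\<^sub>m c"
  shows "stackm a c X Y * concatm a c P Q = 1\<^sub>m (a + c)"
proof (rule eq_matI)
  show "dim_row (stackm a c X Y * concatm a c P Q) = dim_row (1\<^sub>m (a + c))" unfolding stackm_def by simp
  show "dim_col (stackm a c X Y * concatm a c P Q) = dim_col (1\<^sub>m (a + c))" unfolding concatm_def using P by simp
  fix i j assume "i < dim_row (1\<^sub>m (a + c))" "j < dim_col (1\<^sub>m (a + c))"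
  then have i: "i < a + c" and j: "j < a + c" by auto
  show "(stackm a c X Y * concatm a c P Q) $$ (i, j) = 1\<^sub>m (a + c) $$ (i, j)"
    unfolding stack_concat_entry[OF X Y P Q i j] XP XQ YP YQ using i j by auto
qed

lemma concat_stack_mult:
  assumes K: "K \<in> carrier_mat n a" and V: "V \<in> carrier_mat n c"
    and X: "X \<in> carrier_mat a k" and Z: "Z \<in> carrier_mat c k"
  shows "concatm a c K V * stackm a c X Z = K * X + V * Z"
proof (rule eq_matI)
  show "dim_row (concatm a c K V * stackm a c X Z) = dim_row (K * X + V * Z)" unfolding concatm_def using K V by simp
  show "dim_col (concatm a c K V * stackm a c X Z) = dim_col (K * X + V * Z)" unfolding stackm_def using X Z by simp
  fix i j assume "i < dim_row (K * X + V * Z)" "j < dim_col (K * X + V * Z)"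
  then have i: "i < n" and j: "j < k" using K X Z V by auto
  let ?f = "\<lambda>l. row (concatm a c K V) i $ l * col (stackm a c X Z) j $ l"
  have "(concatm a c K V * stackm a c X Z) $$ (i, j) = (\<Sum>l\<in>{0..<a+c}. ?f l)"
    using i j K X unfolding concatm_def stackm_def by (simp add: scalar_prod_def)
  also have "\<dots> = (\<Sum>l\<in>{0..<a}. ?f l) + (\<Sum>l\<in>{a..<a+c}. ?f l)"
    by (rule sum.atLeastLessThan_concat[symmetric]) auto
  also have "(\<Sum>l\<in>{a..<a+c}. ?f l) = (\<Sum>l\<in>{0..<c}. ?f (l + a))"
    using sum.shift_bounds_nat_ivl[of ?f 0 a c] by (simp add: add.commute)
  also have "(\<Sum>l\<in>{0..<a}. ?f l) = (\<Sum>l\<in>{0..<a}. K $$ (i,l) * X $$ (l,j))"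
    by (rule sum.cong) (use i j K X in \<open>auto simp: concatm_def stackm_def\<close>)
  also have "(\<Sum>l\<in>{0..<c}. ?f (l + a)) = (\<Sum>l\<in>{0..<c}. V $$ (i,l) * Z $$ (l,j))"
    by (rule sum.cong) (use i j K X Z V in \<open>auto simp: concatm_def stackm_def\<close>)
  also have "(\<Sum>l\<in>{0..<a}. K $$ (i,l) * X $$ (l,j)) + (\<Sum>l\<in>{0..<c}. V $$ (i,l) * Z $$ (l,j))
     = (K * X + V * Z) $$ (i,j)"
    using i j K X V Z by (simp add: scalar_prod_def)
  finally show "(concatm a c K V * stackm a c X Z) $$ (i, j) = (K * X + V * Z) $$ (i, j)" .
qed

lemma mat_vec_unit: fixes M :: "real mat" assumes M: "M \<in> carrier_mat n k" and i: "i < n" and j: "j < k"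
  shows "(M *\<^sub>v unit_vec k j) $ i = M $$ (i,j)"
proof -
  have "(M *\<^sub>v unit_vec k j) $ i = row M i \<bullet> unit_vec k j" using M i by simp
  also have "\<dots> = row M i $ j" by (rule scalar_prod_right_unit[OF j])
  also have "\<dots> = M $$ (i,j)" using M i j by simp
  finally show ?thesis .
qed

lemma real_vec_self_zero: fixes v :: "real vec" assumes "v \<bullet> v = 0" "v \<in> carrier_vec n"
  shows "v = 0\<^sub>v n"
proof (rule eq_vecI)
  have "(\<Sum>i\<in>{0..<n}. v $ i * v $ i) = 0" using assms unfolding scalar_prod_def by simp
  then have "\<forall>i\<in>{0..<n}. v $ i * v $ i = 0"
    by (subst sum_nonneg_eq_0_iff[symmetric]) auto
  then show "i < dim_vec (0\<^sub>v n) \<Longrightarrow> v $ i = 0\<^sub>v n $ i" for i by auto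
  show "dim_vec v = dim_vec (0\<^sub>v n)" using assms by simp
qed

lemma inj_from_kernel:
  fixes CC K V :: "real mat"
  assumes CC: "CC \<in> carrier_mat a n" and K: "K \<in> carrier_mat n a" and CCK: "CC * K = 1\<^sub>m a"
    and V: "V \<in> carrier_mat n c" and ac: "a + c = n"
    and img: "{V *\<^sub>v x | x. x \<in> carrier_vec c} = {y \<in> carrier_vec n. CC *\<^sub>v y = 0\<^sub>v a}"
  shows "\<exists>Z \<in> carrier_mat c n. Z * V = 1\<^sub>m c"
proof -
  define z where "z j = unit_vec n j - K *\<^sub>v (CC *\<^sub>v unit_vec n j)" for j
  have zc: "z j \<in> carrier_vec n" for j unfolding z_def using K CC by simp
  have "CC *\<^sub>v z j = 0\<^sub>v a" for j
  proof -
    have e: "unit_vec n j \<in> carrier_vec n" by simp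
    have "CC *\<^sub>v z j = CC *\<^sub>v unit_vec n j - CC *\<^sub>v (K *\<^sub>v (CC *\<^sub>v unit_vec n j))"
      unfolding z_def by (rule mult_minus_distrib_mat_vec[OF CC e]) (use K CC in simp)
    also have "CC *\<^sub>v (K *\<^sub>v (CC *\<^sub>v unit_vec n j)) = (CC * K) *\<^sub>v (CC *\<^sub>v unit_vec n j)"
      using CC K by (simp add: assoc_mult_mat_vec)
    also have "\<dots> = CC *\<^sub>v unit_vec n j" unfolding CCK using CC by simp
    finally show ?thesis using CC by simp
  qed
  then have "\<forall>j. \<exists>x. x \<in> carrier_vec c \<and> V *\<^sub>v x = z j"
  proof (intro allI)
    fix j
    assume h: "\<And>j. CC *\<^sub>v z j = 0\<^sub>v a"
    have "z j \<in> {y \<in> carrier_vec n. CC *\<^sub>v y = 0\<^sub>v a}" using h[of j] zc[of j] by simp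
    then have "z j \<in> {V *\<^sub>v x | x. x \<in> carrier_vec c}" using img by simp
    then show "\<exists>x. x \<in> carrier_vec c \<and> V *\<^sub>v x = z j" by auto
  qed
  then obtain xf where xf: "\<And>j. xf j \<in> carrier_vec c" "\<And>j. V *\<^sub>v xf j = z j" by metis
  define Z where "Z = mat c n (\<lambda>(i,j). xf j $ i)"
  have Zc: "Z \<in> carrier_mat c n" unfolding Z_def by simp
  have VZ: "V * Z = 1\<^sub>m n - K * CC"
  proof (rule eq_matI)
    fix i j assume "i < dim_row (1\<^sub>m n - K * CC)" "j < dim_col (1\<^sub>m n - K * CC)"
    then have i: "i < n" and j: "j < n" using K CC by auto
    have cz: "col Z j = xf j" unfolding Z_def using j xf(1)[of j] by (intro eq_vecI) auto
    have "(V * Z) $$ (i,j) = (V *\<^sub>v xf j) $ i" using V Zc i j cz by simp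
    also have "\<dots> = z j $ i" using xf(2) by simp
    also have "\<dots> = unit_vec n j $ i - (K *\<^sub>v (CC *\<^sub>v unit_vec n j)) $ i"
      unfolding z_def using i K by simp
    also have "K *\<^sub>v (CC *\<^sub>v unit_vec n j) = (K * CC) *\<^sub>v unit_vec n j"
      using K CC by (simp add: assoc_mult_mat_vec)
    also have "((K * CC) *\<^sub>v unit_vec n j) $ i = (K * CC) $$ (i,j)"
      by (rule mat_vec_unit) (use K CC i j in auto)
    finally show "(V * Z) $$ (i,j) = (1\<^sub>m n - K * CC) $$ (i,j)" using i j K CC by simp
  qed (use V Zc K CC in auto)
  have QS: "concatm a c K V * stackm a c CC Z = 1\<^sub>m n"
  proof -
    have "concatm a c K V * stackm a c CC Z = K * CC + V * Z"
      by (rule concat_stack_mult[OF K V CC Zc])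
    also have "\<dots> = 1\<^sub>m n" unfolding VZ using K CC by (intro eq_matI) auto
    finally show ?thesis .
  qed
  have Qc: "concatm a c K V \<in> carrier_mat n n" unfolding concatm_def using K ac by simp
  have Sc: "stackm a c CC Z \<in> carrier_mat n n" unfolding stackm_def using CC ac by simp
  have SQ: "stackm a c CC Z * concatm a c K V = 1\<^sub>m n"
    by (rule mat_mult_left_right_inverse[OF Qc Sc QS])
  have "Z * V = 1\<^sub>m c"
  proof (rule eq_matI)
    fix i j assume "i < dim_row (1\<^sub>m c)" "j < dim_col (1\<^sub>m c)"
    then have i: "i < c" and j: "j < c" by auto
    have "(stackm a c CC Z * concatm a c K V) $$ (a + i, a + j) = (Z * V) $$ (i, j)"
      using stack_concat_entry[OF CC Zc K V, of "a + i" "a + j"] i j by simp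
    then show "(Z * V) $$ (i, j) = 1\<^sub>m c $$ (i, j)" unfolding SQ using i j ac by simp
  qed (use Zc V in auto)
  then show ?thesis using Zc by blast
qed

lemma pinv_V:
  fixes V Z :: "real mat"
  assumes V: "V \<in> carrier_mat n c" and Z: "Z \<in> carrier_mat c n" and ZV: "Z * V = 1\<^sub>m c"
  shows "pinv V * V = 1\<^sub>m c" "pinv V \<in> carrier_mat c n"
proof -
  define H where "H = transpose_mat V * V"
  have VT: "transpose_mat V \<in> carrier_mat c n" using V by simp
  have Hc: "H \<in> carrier_mat c c" unfolding H_def using V by simp
  have dH: "det H \<noteq> 0"
  proof
    assume "det H = 0"
    then obtain v where v: "v \<in> carrier_vec c" "v \<noteq> 0\<^sub>v c" "H *\<^sub>v v = 0\<^sub>v c"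
      using det_0_iff_vec_prod_zero[OF Hc] by blast
    have Vv: "V *\<^sub>v v \<in> carrier_vec n" using V v by simp
    have "(V *\<^sub>v v) \<bullet> (V *\<^sub>v v) = (transpose_mat V *\<^sub>v (V *\<^sub>v v)) \<bullet> v"
      using transpose_vec_mult_scalar[OF V v(1) Vv] by simp
    also have "transpose_mat V *\<^sub>v (V *\<^sub>v v) = H *\<^sub>v v"
      unfolding H_def using V v by (simp add: assoc_mult_mat_vec)
    finally have "(V *\<^sub>v v) \<bullet> (V *\<^sub>v v) = 0" using v by simp
    then have "V *\<^sub>v v = 0\<^sub>v n" using real_vec_self_zero Vv by blast
    then have "Z *\<^sub>v (V *\<^sub>v v) = 0\<^sub>v c" using Z by (intro eq_vecI) auto
    moreover have "Z *\<^sub>v (V *\<^sub>v v) = v" using Z V v ZV by (simp add: assoc_mult_mat_vec[symmetric])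
    ultimately show False using v by simp
  qed
  define Hi where "Hi = (1 / det H) \<cdot>\<^sub>m adj_mat H"
  have Hic: "Hi \<in> carrier_mat c c" unfolding Hi_def using adj_mat(1)[OF Hc] by simp
  have i1: "H * Hi = 1\<^sub>m c" and i2: "Hi * H = 1\<^sub>m c" unfolding Hi_def using adj_inv[OF Hc dH] by auto
  have p: "pinv V = Hi * transpose_mat V"
    by (rule pinv_col[OF V Hic]) (use i1 i2 H_def in auto)
  show "pinv V \<in> carrier_mat c n" unfolding p using Hic VT by simp
  show "pinv V * V = 1\<^sub>m c" unfolding p using assoc_mult_mat[OF Hic VT V] i2 H_def by simp
qed

lemma calB_nice:
  assumes A: "A \<in> carrier_mat n n" and B: "B \<in> carrier_mat n m"
    and P1: "P1 n m p B L" and rn: "r \<le> n"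
  shows "niceM n (r * m) (calB n m A B L r)"
proof -
  have L: "smooth_mat_fun m m L" and Lb: "\<forall>k\<le>n. bounded_mat_fun (mderiv_n k L)"
    using P1 unfolding P1_def by auto
  have "nice (\<lambda>t. calB n m A B L r t $$ (i,j))" if i: "i < n" and j: "j < r * m" for i j
  proof -
    have m0: "m > 0" using j by (cases m) auto
    have jd: "j div m < r" using j m0 by (simp add: div_less_iff_less_mult mult.commute)
    have jm: "j mod m < m" using m0 by simp
    have e: "calB n m A B L r t $$ (i,j) = ((DA A ^^ (j div m)) (\<lambda>s. B * L s) t) $$ (i, j mod m)" for t
      unfolding calB_def using i j by simp
    have "sm (n - j div m) (\<lambda>t. ((DA A ^^ (j div m)) (\<lambda>s. B * L s) t) $$ (i, j mod m))"
      using DA_iter[OF L Lb B A, of "j div m"] jd rn i jm by auto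
    moreover have "n - j div m = Suc (n - j div m - 1)" using jd rn by simp
    ultimately show ?thesis unfolding e by (metis sm_nice)
  qed
  moreover have "calB n m A B L r t \<in> carrier_mat n (r * m)" for t unfolding calB_def by simp
  ultimately show ?thesis unfolding niceM_def by auto
qed

theorem part1:
  assumes dh: "data_hyps n m p A B C f L r" and kb: "kernel_basis n (calC n p A C r) V"
    and dc: "det_cond n m p A B C L r"
  shows "lyapunov_transformation n (calU n V (calC n p A C r) (calB n m A B L r))"
proof -
  define CC where "CC = calC n p A C r"
  define BB where "BB = calB n m A B L r"
  define a where "a = r * p"
  have A: "A \<in> carrier_mat n n" and B: "B \<in> carrier_mat n m" and P1: "P1 n m p B L"
    using dh unfolding data_hyps_def by auto
  have CCc: "CC \<in> carrier_mat a n" unfolding CC_def calC_def a_def by simp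
  have BBc: "BB t \<in> carrier_mat n (r * m)" for t unfolding BB_def calB_def by simp
  define X where "X = (\<lambda>t. CC * BB t)"
  define G where "G = (\<lambda>t. X t * transpose_mat (X t))"
  have Xc: "X t \<in> carrier_mat a (r * m)" for t unfolding X_def using CCc BBc by simp
  have Gc: "G t \<in> carrier_mat a a" for t unfolding G_def
    by (rule mult_carrier_mat[OF Xc]) (simp add: Xc)
  obtain \<alpha> where al: "\<alpha> > 0" and dG: "\<And>t. det (G t) \<ge> \<alpha>"
    using dc unfolding det_cond_def G_def X_def CC_def BB_def by auto
  have dG0: "det (G t) \<noteq> 0" for t using dG[of t] al by auto
  define Gi where "Gi = (\<lambda>t. (1 / det (G t)) \<cdot>\<^sub>m adj_mat (G t))"
  have Gic: "Gi t \<in> carrier_mat a a" for t unfolding Gi_def using adj_mat(1)[OF Gc] by simp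
  have GGi: "G t * Gi t = 1\<^sub>m a" and GiG: "Gi t * G t = 1\<^sub>m a" for t
    unfolding Gi_def using adj_inv[OF Gc dG0] by auto
  define P where "P = (\<lambda>t. transpose_mat (X t) * Gi t)"
  have eX: "CC * BB t = X t" for t unfolding X_def by simp
  have pX: "pinv (CC * BB t) = P t" for t
    unfolding P_def eX by (rule pinv_row[OF Xc Gic]) (use GGi GiG G_def in auto)
  define K where "K = (\<lambda>t. BB t * P t)"
  have Pc: "P t \<in> carrier_mat (r * m) a" for t unfolding P_def
    by (rule mult_carrier_mat[OF _ Gic]) (simp add: Xc)
  have Kc: "K t \<in> carrier_mat n a" for t unfolding K_def by (rule mult_carrier_mat[OF BBc Pc])
  have CCK: "CC * K t = 1\<^sub>m a" for t
  proof -
    have XT: "transpose_mat (X t) \<in> carrier_mat (r * m) a" using Xc by simp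
    have "CC * K t = (CC * BB t) * P t" unfolding K_def using assoc_mult_mat[OF CCc BBc Pc] by simp
    also have "\<dots> = X t * (transpose_mat (X t) * Gi t)" unfolding X_def P_def by simp
    also have "\<dots> = G t * Gi t" unfolding G_def using assoc_mult_mat[OF Xc XT Gic] by simp
    finally show ?thesis using GGi by simp
  qed
  have rk: "mrank CC = a" by (rule mrank_right_inv[OF CCc Kc CCK])
  have an: "a \<le> n"
  proof -
    have "vec_space.rank a CC \<le> n" by (rule vec_space.rank_le_nc[OF CCc])
    then show ?thesis using rk CCc unfolding mrank_def by simp
  qed
  define c where "c = n - a"
  have ac: "a + c = n" unfolding c_def using an by simp
  have Vc: "V \<in> carrier_mat n c" and img: "{V *\<^sub>v x | x. x \<in> carrier_vec c} = {y \<in> carrier_vec n. CC *\<^sub>v y = 0\<^sub>v a}"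
    using kb CCc unfolding kernel_basis_def CC_def[symmetric] rk c_def by auto
  obtain Z where Zc: "Z \<in> carrier_mat c n" and ZV: "Z * V = 1\<^sub>m c"
    using inj_from_kernel[OF CCc Kc CCK Vc ac img] by blast
  have pV: "pinv V * V = 1\<^sub>m c" and pVc: "pinv V \<in> carrier_mat c n"
    using pinv_V[OF Vc Zc ZV] by auto
  have CCV: "CC * V = 0\<^sub>m a c"
  proof (rule eq_matI)
    fix i j assume "i < dim_row (0\<^sub>m a c)" "j < dim_col (0\<^sub>m a c)"
    then have i: "i < a" and j: "j < c" by auto
    have ej: "unit_vec c j \<in> carrier_vec c" by simp
    have "V *\<^sub>v unit_vec c j \<in> {y \<in> carrier_vec n. CC *\<^sub>v y = 0\<^sub>v a}" using img ej by blast
    then have z: "CC *\<^sub>v (V *\<^sub>v unit_vec c j) = 0\<^sub>v a" by simp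
    have "(CC * V) $$ (i,j) = ((CC * V) *\<^sub>v unit_vec c j) $ i"
      by (rule mat_vec_unit[symmetric]) (use CCc Vc i j in auto)
    also have "(CC * V) *\<^sub>v unit_vec c j = CC *\<^sub>v (V *\<^sub>v unit_vec c j)"
      using CCc Vc by (simp add: assoc_mult_mat_vec)
    finally show "(CC * V) $$ (i,j) = 0\<^sub>m a c $$ (i,j)" using z i j by simp
  qed (use CCc Vc in auto)
  define N where "N = (\<lambda>t. pinv V * (1\<^sub>m n - K t * CC))"
  have KCc: "K t * CC \<in> carrier_mat n n" for t by (rule mult_carrier_mat[OF Kc CCc])
  have Nc: "N t \<in> carrier_mat c n" for t unfolding N_def
    by (rule mult_carrier_mat[OF pVc minus_carrier_mat[OF KCc]])
  have calN_eq: "calN n V CC BB t = N t" for t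
    unfolding calN_def N_def K_def pX by simp
  have IKC: "1\<^sub>m n - K t * CC \<in> carrier_mat n n" for t by (rule minus_carrier_mat[OF KCc])
  have NK: "N t * K t = 0\<^sub>m c a" for t
  proof -
    have "(1\<^sub>m n - K t * CC) * K t = 1\<^sub>m n * K t - (K t * CC) * K t"
      by (rule minus_mult_distrib_mat) (use KCc[of t] Kc[of t] CCc in auto)
    also have "(K t * CC) * K t = K t * (CC * K t)" using assoc_mult_mat[OF Kc[of t] CCc Kc[of t]] by simp
    also have "\<dots> = K t" using CCK[of t] right_mult_one_mat[OF Kc[of t]] by simp
    also have "1\<^sub>m n * K t - K t = 0\<^sub>m n a" using Kc[of t] by (intro eq_matI) auto
    finally have e: "(1\<^sub>m n - K t * CC) * K t = 0\<^sub>m n a" .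
    have "N t * K t = pinv V * ((1\<^sub>m n - K t * CC) * K t)"
      unfolding N_def using assoc_mult_mat[OF pVc IKC[of t] Kc[of t]] by simp
    then show ?thesis unfolding e using pVc by simp
  qed
  have NV: "N t * V = 1\<^sub>m c" for t
  proof -
    have "(1\<^sub>m n - K t * CC) * V = 1\<^sub>m n * V - (K t * CC) * V"
      by (rule minus_mult_distrib_mat) (use KCc[of t] Kc[of t] CCc Vc in auto)
    also have "(K t * CC) * V = K t * (CC * V)" using assoc_mult_mat[OF Kc[of t] CCc Vc] by simp
    also have "\<dots> = 0\<^sub>m n c" unfolding CCV using Kc[of t] by simp
    also have "1\<^sub>m n * V - 0\<^sub>m n c = V" using Vc by (intro eq_matI) auto
    finally have e: "(1\<^sub>m n - K t * CC) * V = V" .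
    have "N t * V = pinv V * ((1\<^sub>m n - K t * CC) * V)"
      unfolding N_def using assoc_mult_mat[OF pVc IKC[of t] Vc] by simp
    then show ?thesis unfolding e pV .
  qed
  define U where "U = (\<lambda>t. stackm a c CC (N t))"
  have dCC: "dim_row CC = a" "dim_col CC = n" using CCc by auto
  have U_eq: "calU n V (calC n p A C r) (calB n m A B L r) = U"
  proof (rule ext)
    fix t
    show "calU n V (calC n p A C r) (calB n m A B L r) t = U t"
      unfolding calU_def U_def stackm_def CC_def[symmetric] BB_def[symmetric] rk calN_eq dCC
      using c_def by simp
  qed
  define W where "W = (\<lambda>t. concatm a c (K t) V)"
  have Uc: "U t \<in> carrier_mat n n" for t unfolding U_def stackm_def using CCc ac by simp
  have Wc: "W t \<in> carrier_mat n n" for t unfolding W_def concatm_def using Kc[of t] ac by simp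
  have UW: "U t * W t = 1\<^sub>m n" for t
    unfolding U_def W_def ac[symmetric] by (rule stack_concat_one[OF CCc Nc Kc Vc CCK CCV NK NV])
  have WU: "W t * U t = 1\<^sub>m n" for t by (rule mat_mult_left_right_inverse[OF Uc Wc UW])
  have nK: "niceM n a K"
  proof (cases "a = 0")
    case True
    then show ?thesis unfolding niceM_def using Kc by auto
  next
    case False
    then have "r \<le> a" unfolding a_def by (cases p) auto
    then have rn: "r \<le> n" using an by simp
    have nBB: "niceM n (r * m) BB" unfolding BB_def by (rule calB_nice[OF A B P1 rn])
    have nX: "niceM a (r * m) X" unfolding X_def by (rule niceM_mult[OF niceM_const[OF CCc] nBB])
    have nG: "niceM a a G" unfolding G_def by (rule niceM_mult[OF nX niceM_transpose[OF nX]])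
    have nd: "nice (\<lambda>t. 1 / det (G t))" by (rule nice_inverse[OF nice_det[OF nG] dG al])
    have nGi: "niceM a a Gi" unfolding Gi_def by (rule niceM_smult[OF nd niceM_adj[OF nG]])
    have nP: "niceM (r * m) a P" unfolding P_def by (rule niceM_mult[OF niceM_transpose[OF nX] nGi])
    show ?thesis unfolding K_def by (rule niceM_mult[OF nBB nP])
  qed
  have nN: "niceM c n N" unfolding N_def
    by (rule niceM_mult[OF niceM_const[OF pVc] niceM_minus[OF niceM_const niceM_mult[OF nK niceM_const[OF CCc]]]]) simp
  have nU: "niceM n n U"
  proof -
    have "nice (\<lambda>t. U t $$ (i,j))" if i: "i < n" and j: "j < n" for i j
    proof (cases "i < a")
      case True
      have "U t $$ (i,j) = CC $$ (i,j)" for t unfolding U_def stackm_def using True i j CCc ac by simp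
      then show ?thesis using nice_const by simp
    next
      case False
      have "U t $$ (i,j) = N t $$ (i - a, j)" for t unfolding U_def stackm_def using False i j CCc ac by simp
      moreover have "nice (\<lambda>t. N t $$ (i - a, j))" by (rule niceM_nice[OF nN]) (use False i j ac in auto)
      ultimately show ?thesis by simp
    qed
    then show ?thesis unfolding niceM_def using Uc by auto
  qed
  have nW: "niceM n n W"
  proof -
    have "nice (\<lambda>t. W t $$ (i,j))" if i: "i < n" and j: "j < n" for i j
    proof (cases "j < a")
      case True
      have "W t $$ (i,j) = K t $$ (i,j)" for t unfolding W_def concatm_def using True i j Kc[of t] ac by simp
      moreover have "nice (\<lambda>t. K t $$ (i, j))" by (rule niceM_nice[OF nK]) (use True i in auto)
      ultimately show ?thesis by simp
    next
      case False
      have "W t $$ (i,j) = V $$ (i, j - a)" for t unfolding W_def concatm_def using False i j Kc[of t] ac by simp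
      then show ?thesis using nice_const by simp
    qed
    then show ?thesis unfolding niceM_def using Wc by auto
  qed
  have L1: "\<forall>t. U t \<in> carrier_mat n n \<and> invertible_mat (U t)"
  proof (intro allI conjI)
    fix t
    show "U t \<in> carrier_mat n n" by (rule Uc)
    show "invertible_mat (U t)" unfolding invertible_mat_def inverts_mat_def square_mat.simps
    proof (intro conjI exI)
      show "dim_col (U t) = dim_row (U t)" using Uc[of t] by simp
      show "U t * W t = 1\<^sub>m (dim_row (U t))" using Uc[of t] UW[of t] by simp
      show "W t * U t = 1\<^sub>m (dim_row (W t))" using Wc[of t] WU[of t] by simp
    qed
  qed
  have L2: "\<forall>i<n. \<forall>j<n. (\<forall>t. (\<lambda>s. U s $$ (i,j)) differentiable (at t)) \<and>
                  continuous_on UNIV (deriv (\<lambda>s. U s $$ (i,j)))"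
  proof (intro allI impI)
    fix i j assume i: "i < n" and j: "j < n"
    have "nice (\<lambda>s. U s $$ (i,j))" by (rule niceM_nice[OF nU i j])
    then show "(\<forall>t. (\<lambda>s. U s $$ (i, j)) differentiable at t) \<and> continuous_on UNIV (deriv (\<lambda>s. U s $$ (i, j)))"
      unfolding nice_def by auto
  qed
  have dU: "dim_row (U t) = n" "dim_col (U t) = n" for t using Uc[of t] by auto
  have L3: "bounded_mat_fun U"
  proof -
    obtain K1 where "\<forall>t i j. i < n \<longrightarrow> j < n \<longrightarrow> \<bar>U t $$ (i,j)\<bar> \<le> K1" using niceM_bnd[OF nU] by blast
    then show ?thesis unfolding bounded_mat_fun_def dU by blast
  qed
  have L4: "\<exists>K. \<forall>t. \<exists>Mi\<in>carrier_mat n n. U t * Mi = 1\<^sub>m n \<and> Mi * U t = 1\<^sub>m n \<and>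
              (\<forall>i<n. \<forall>j<n. \<bar>Mi $$ (i, j)\<bar> \<le> K)"
  proof -
    obtain K2 where K2: "\<forall>t i j. i < n \<longrightarrow> j < n \<longrightarrow> \<bar>W t $$ (i,j)\<bar> \<le> K2" using niceM_bnd[OF nW] by blast
    show ?thesis using Wc UW WU K2 by blast
  qed
  have L5: "bounded_mat_fun (mderiv U)"
  proof -
    obtain K3 where "\<forall>t i j. i < n \<longrightarrow> j < n \<longrightarrow> \<bar>deriv (\<lambda>s. U s $$ (i,j)) t\<bar> \<le> K3"
      using niceM_deriv_bnd[OF nU] by blast
    then show ?thesis unfolding bounded_mat_fun_def mderiv_def dU by auto
  qed
  show ?thesis unfolding U_eq lyapunov_transformation_def by (intro conjI L1 L2 L3 L4 L5)
qed

definition lg :: "real \<Rightarrow> real" where "lg t = 1 / (1 + exp t)"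

lemma lg_pos: "lg t > 0" unfolding lg_def by (simp add: add_pos_pos)
lemma lg_lt1: "lg t < 1" unfolding lg_def
  using divide_less_eq_1_pos[of "1 + exp t" 1] by (simp add: add_pos_pos)

lemma lg_deriv: "(lg has_real_derivative (lg t ^ 2 - lg t)) (at t)"
proof -
  have ne: "1 + exp t \<noteq> 0" by (smt (verit) exp_gt_zero)
  have d1: "((\<lambda>t. 1 + exp t) has_real_derivative exp t) (at t)"
    using DERIV_add[OF DERIV_const DERIV_exp, of 1 t] by simp
  have "((\<lambda>t. inverse (1 + exp t)) has_real_derivative - (exp t * inverse ((1 + exp t) ^ Suc (Suc 0)))) (at t)"
    by (rule DERIV_inverse_fun[OF d1 ne])
  moreover have "- (exp t * inverse ((1 + exp t) ^ Suc (Suc 0))) = - (exp t) / (1 + exp t)^2"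
    using ne by (simp add: power2_eq_square field_simps)
  ultimately have "((\<lambda>t. 1 / (1 + exp t)) has_real_derivative - (exp t) / (1 + exp t)^2) (at t)"
    by (simp add: inverse_eq_divide)
  moreover have "- (exp t) / (1 + exp t)^2 = lg t ^ 2 - lg t"
  proof -
    have aux: "q \<noteq> 0 \<Longrightarrow> - (q - 1) / q^2 = (1 / q)^2 - 1 / q" for q :: real
      by (simp add: field_simps power2_eq_square)
    show ?thesis using aux[OF ne] unfolding lg_def by simp
  qed
  ultimately show ?thesis unfolding lg_def[abs_def] by simp
qed

lemma lg_funpow: "\<exists>P. (deriv ^^ k) lg = (\<lambda>t. poly P (lg t))"
proof (induction k)
  case 0
  show ?case by (rule exI[of _ "[:0, 1:]"]) auto
next
  case (Suc k)
  then obtain P where P: "(deriv ^^ k) lg = (\<lambda>t. poly P (lg t))" by blast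
  have D: "deriv (\<lambda>t. poly P (lg t)) = (\<lambda>t. poly (pderiv P * [:0, -1, 1:]) (lg t))"
  proof (rule ext, rule DERIV_imp_deriv)
    fix t
    have "((\<lambda>t. poly P (lg t)) has_real_derivative poly (pderiv P) (lg t) * (lg t ^ 2 - lg t)) (at t)"
      using DERIV_chain2[OF poly_DERIV lg_deriv] by simp
    moreover have "poly (pderiv P) (lg t) * (lg t ^ 2 - lg t) = poly (pderiv P * [:0, -1, 1:]) (lg t)"
      by (simp add: algebra_simps power2_eq_square)
    ultimately show "((\<lambda>t. poly P (lg t)) has_real_derivative poly (pderiv P * [:0, -1, 1:]) (lg t)) (at t)"
      by simp
  qed
  have "(deriv ^^ Suc k) lg = deriv ((deriv ^^ k) lg)" by simp
  also have "\<dots> = deriv (\<lambda>t. poly P (lg t))" by (simp only: P)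
  also have "\<dots> = (\<lambda>t. poly (pderiv P * [:0, -1, 1:]) (lg t))" by (rule D)
  finally show ?case by blast
qed

lemma lg_diff: "(deriv ^^ k) lg differentiable (at t)"
proof -
  obtain P where P: "(deriv ^^ k) lg = (\<lambda>t. poly P (lg t))" using lg_funpow by blast
  have "((\<lambda>t. poly P (lg t)) has_real_derivative poly (pderiv P) (lg t) * (lg t ^ 2 - lg t)) (at t)"
    using DERIV_chain2[OF poly_DERIV lg_deriv] by simp
  then show ?thesis unfolding P using real_differentiable_def by blast
qed

lemma deriv_lg: "deriv lg t = lg t ^ 2 - lg t"
  by (rule DERIV_imp_deriv[OF lg_deriv])

lemma det11: fixes M :: "real mat" assumes "M \<in> carrier_mat 1 1" shows "det M = M $$ (0,0)"
proof -
  have "upper_triangular M" using assms unfolding upper_triangular_def by auto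
  then have "det M = prod_list (diag_mat M)" using det_upper_triangular assms by blast
  also have "diag_mat M = [M $$ (0,0)]" using assms unfolding diag_mat_def by auto
  finally show ?thesis by simp
qed

lemma mrank11: fixes M :: "real mat" assumes M: "M \<in> carrier_mat 1 1" and nz: "M $$ (0,0) \<noteq> 0"
  shows "mrank M = 1"
proof -
  define R where "R = mat 1 1 (\<lambda>_. 1 / M $$ (0,0))"
  have R: "R \<in> carrier_mat 1 1" unfolding R_def by simp
  have "M * R = 1\<^sub>m 1"
    using M nz unfolding R_def by (intro eq_matI) (auto simp: scalar_prod_def)
  then show ?thesis using mrank_right_inv[OF M R] by simp
qed

lemma lg_small: assumes "a > 0" shows "\<exists>t. lg t ^ 2 < a"
proof -
  define t where "t = 1 - ln a"
  have "lg t < 1 / exp t" unfolding lg_def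
    by (rule divide_strict_left_mono) (simp_all add: add_pos_pos)
  also have "1 / exp t = exp (- t)" by (simp add: exp_minus inverse_eq_divide)
  also have "exp (- t) = a * exp (-1)" unfolding t_def using assms by (simp add: exp_diff exp_minus divide_inverse)
  also have "\<dots> < a" using assms by simp
  finally have "lg t < a" .
  moreover have "lg t ^ 2 < lg t" using lg_pos[of t] lg_lt1[of t]
    by (simp add: power2_eq_square)
  ultimately show ?thesis by (meson less_trans)
qed

theorem part2:
  "\<exists>n m p A B C f L r V.
            data_hyps n m p A B C f L r \<and>
            kernel_basis n (calC n p A C r) V \<and>
            lyapunov_transformation n (calU n V (calC n p A C r) (calB n m A B L r)) \<and>
            \<not> det_cond n m p A B C L r"
proof -
  define A :: "real mat" where "A = 0\<^sub>m 1 1"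
  define B :: "real mat" where "B = 1\<^sub>m 1"
  define C :: "real mat" where "C = 1\<^sub>m 1"
  define f :: "real \<Rightarrow> real vec \<Rightarrow> real vec \<Rightarrow> real vec" where "f = (\<lambda>t x u. 0\<^sub>v 1)"
  define L :: "real \<Rightarrow> real mat" where "L = (\<lambda>t. mat 1 1 (\<lambda>_. lg t))"
  define V :: "real mat" where "V = 0\<^sub>m 1 0"
  have Lc: "L t \<in> carrier_mat 1 1" for t unfolding L_def by simp
  have L00: "L t $$ (0,0) = lg t" for t unfolding L_def by simp
  have BL: "B * L t = L t" for t unfolding B_def using Lc[of t] by simp
  have CAB: "C * A ^\<^sub>m (1 - 1) * B * L t = L t" for t unfolding C_def B_def A_def using Lc[of t] by simp
  have mL: "mrank (L t) = 1" for t using mrank11[OF Lc] L00 lg_pos[of t] by simp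
  have CC: "calC 1 1 A C 1 = 1\<^sub>m 1" unfolding calC_def C_def A_def by (intro eq_matI) auto
  have BB: "calB 1 1 A B L 1 t = L t" for t
    unfolding calB_def using BL[of t] Lc[of t] by (intro eq_matI) auto
  have mCC: "mrank (1\<^sub>m 1 :: real mat) = 1" using mrank11[of "1\<^sub>m 1"] by simp
  have dL: "dim_row (L t) = 1" "dim_col (L t) = 1" for t unfolding L_def by auto
  have L00f: "(\<lambda>s. L s $$ (0, 0)) = lg" by (rule ext) (simp add: L00)
  have Lent: "(\<lambda>s. L s $$ (i, j)) = lg" if "i < 1" "j < 1" for i j using that L00 by auto
  have dh: "data_hyps 1 1 1 A B C f L 1"
    unfolding data_hyps_def
  proof (intro conjI)
    show "A \<in> carrier_mat 1 1" "B \<in> carrier_mat 1 1" "C \<in> carrier_mat 1 1" unfolding A_def B_def C_def by auto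
    show "(1::nat) \<le> 1" by simp
    show "cont_bounded_rhs 1 1 f" unfolding cont_bounded_rhs_def f_def
    proof (intro conjI)
      show "\<forall>t. \<forall>x\<in>carrier_vec 1. \<forall>u\<in>carrier_vec 1. (0\<^sub>v 1 :: real vec) \<in> carrier_vec 1" by simp
      show "\<exists>K. \<forall>t. \<forall>x\<in>carrier_vec 1. \<forall>u\<in>carrier_vec 1. \<forall>i<1. \<bar>(0\<^sub>v 1 :: real vec) $ i\<bar> \<le> K"
        by (rule exI[of _ 0]) auto
      show "\<forall>t. \<forall>x\<in>carrier_vec 1. \<forall>u\<in>carrier_vec 1. \<forall>\<epsilon>>0. \<exists>\<delta>>0. \<forall>t'. \<forall>x'\<in>carrier_vec 1. \<forall>u'\<in>carrier_vec 1.
          \<bar>t' - t\<bar> + vdist1 x' x + vdist1 u' u < \<delta> \<longrightarrow> vdist1 (0\<^sub>v 1 :: real vec) (0\<^sub>v 1) < \<epsilon>"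
        unfolding vdist1_def by (auto intro: exI[of _ 1])
    qed
    show "P1 1 1 1 B L" unfolding P1_def
    proof (intro conjI)
      show "smooth_mat_fun 1 1 L" unfolding smooth_mat_fun_def
        using Lc lg_diff Lent by auto
      show "\<forall>k\<le>1. bounded_mat_fun (mderiv_n k L)"
      proof (intro allI impI)
        fix k :: nat assume k: "k \<le> 1"
        have "\<bar>(deriv ^^ k) lg t\<bar> \<le> 1" for t
        proof (cases k)
          case 0 then show ?thesis using lg_pos[of t] lg_lt1[of t] by simp
        next
          case (Suc k')
          then have "k = 1" using k by simp
          then have "(deriv ^^ k) lg t = lg t ^ 2 - lg t" using deriv_lg by simp
          moreover have "\<bar>lg t ^ 2 - lg t\<bar> \<le> 1" using lg_pos[of t] lg_lt1[of t]
            by (simp add: power2_eq_square abs_le_iff) (smt (verit) mult_le_cancel_right1 mult_pos_pos)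
          ultimately show ?thesis by simp
        qed
        then show "bounded_mat_fun (mderiv_n k L)"
          unfolding bounded_mat_fun_def mderiv_n_def using Lc by (intro exI[of _ 1]) (auto simp: L00f dL)
      qed
      show "\<exists>q\<ge>1. \<forall>t. mrank (B * L t) = q" using BL mL by auto
    qed
    show "P2 1 1 1 A B C f L 1" unfolding P2_def using CAB mL by auto
  qed
  have kb: "kernel_basis 1 (calC 1 1 A C 1) V"
    unfolding kernel_basis_def CC mCC
  proof (intro conjI)
    show "V \<in> carrier_mat 1 (1 - 1)" unfolding V_def by simp
    have l: "{V *\<^sub>v x |x. x \<in> carrier_vec (1 - 1)} = {0\<^sub>v 1}"
    proof -
      have "V *\<^sub>v x = 0\<^sub>v 1" if "x \<in> carrier_vec (1 - 1)" for x
        unfolding V_def using that by (intro eq_vecI) (auto simp: scalar_prod_def)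
      moreover have z: "(0\<^sub>v 0 :: real vec) \<in> carrier_vec (1 - 1)" by simp
      ultimately have "V *\<^sub>v 0\<^sub>v 0 = 0\<^sub>v 1" by blast
      with z \<open>\<And>x. x \<in> carrier_vec (1 - 1) \<Longrightarrow> V *\<^sub>v x = 0\<^sub>v 1\<close> show ?thesis
        by (auto intro!: exI[of _ "0\<^sub>v 0"])
    qed
    have r: "{y \<in> carrier_vec 1. 1\<^sub>m 1 *\<^sub>v y = 0\<^sub>v (dim_row (1\<^sub>m 1 :: real mat))} = {0\<^sub>v 1 :: real vec}"
      by auto
    show "{V *\<^sub>v x |x. x \<in> carrier_vec (1 - 1)} = {y \<in> carrier_vec 1. 1\<^sub>m 1 *\<^sub>v y = 0\<^sub>v (dim_row (1\<^sub>m 1 :: real mat))}"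
      unfolding l r ..
  qed
  have Ueq: "calU 1 V (calC 1 1 A C 1) (calB 1 1 A B L 1) = (\<lambda>t. 1\<^sub>m 1)"
    unfolding CC calU_def mCC by (intro ext eq_matI) auto
  have Q1: "\<forall>t::real. (1\<^sub>m 1 :: real mat) \<in> carrier_mat 1 1 \<and> invertible_mat (1\<^sub>m 1 :: real mat)"
    unfolding invertible_mat_def inverts_mat_def by (auto intro!: exI[of _ "1\<^sub>m 1"])
  have Q2: "\<forall>i<1. \<forall>j<1. (\<forall>t. (\<lambda>s::real. (1\<^sub>m 1 :: real mat) $$ (i, j)) differentiable at t) \<and>
                  continuous_on UNIV (deriv (\<lambda>s::real. (1\<^sub>m 1 :: real mat) $$ (i, j)))"
    unfolding deriv_fun_const by simp
  have Q3: "bounded_mat_fun (\<lambda>t::real. 1\<^sub>m 1 :: real mat)" unfolding bounded_mat_fun_def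
    by (intro exI[of _ 1]) auto
  have Q4: "\<exists>K. \<forall>t::real. \<exists>Mi\<in>carrier_mat 1 1. (1\<^sub>m 1 :: real mat) * Mi = 1\<^sub>m 1 \<and> Mi * 1\<^sub>m 1 = 1\<^sub>m 1 \<and>
        (\<forall>i<1. \<forall>j<1. \<bar>Mi $$ (i, j)\<bar> \<le> K)"
    by (intro exI[of _ 1] allI bexI[of _ "1\<^sub>m 1"]) auto
  have Q5: "bounded_mat_fun (mderiv (\<lambda>t::real. 1\<^sub>m 1 :: real mat))"
    unfolding bounded_mat_fun_def mderiv_def deriv_fun_const by (intro exI[of _ 0]) auto
  have ly: "lyapunov_transformation 1 (calU 1 V (calC 1 1 A C 1) (calB 1 1 A B L 1))"
    unfolding Ueq lyapunov_transformation_def by (intro conjI Q1 Q2 Q3 Q4 Q5)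
  have ndc: "\<not> det_cond 1 1 1 A B C L 1"
  proof
    assume "det_cond 1 1 1 A B C L 1"
    then obtain \<alpha> where al: "\<alpha> > 0" and h: "\<And>t. det (calC 1 1 A C 1 * calB 1 1 A B L 1 t *
        transpose_mat (calC 1 1 A C 1 * calB 1 1 A B L 1 t)) \<ge> \<alpha>"
      unfolding det_cond_def by auto
    obtain t where t: "lg t ^ 2 < \<alpha>" using lg_small[OF al] by blast
    have M: "L t * transpose_mat (L t) \<in> carrier_mat 1 1" using Lc[of t] by simp
    have "det (calC 1 1 A C 1 * calB 1 1 A B L 1 t * transpose_mat (calC 1 1 A C 1 * calB 1 1 A B L 1 t))
        = det (L t * transpose_mat (L t))" unfolding CC BB using Lc[of t] by simp
    also have "\<dots> = (L t * transpose_mat (L t)) $$ (0,0)" by (rule det11[OF M])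
    also have "\<dots> = lg t ^ 2" using Lc[of t] L00[of t] by (simp add: scalar_prod_def power2_eq_square)
    finally show False using h[of t] t by simp
  qed
  show ?thesis using dh kb ly ndc by blast
qed

theorem lemma2:
  shows "(\<forall>n m p A B C f L r V.
            data_hyps n m p A B C f L r \<longrightarrow>
            kernel_basis n (calC n p A C r) V \<longrightarrow>
            det_cond n m p A B C L r \<longrightarrow>
            lyapunov_transformation n (calU n V (calC n p A C r) (calB n m A B L r)))
       \<and> (\<exists>n m p A B C f L r V.
            data_hyps n m p A B C f L r \<and>
            kernel_basis n (calC n p A C r) V \<and>
            lyapunov_transformation n (calU n V (calC n p A C r) (calB n m A B L r)) \<and>
            \<not> det_cond n m p A B C L r)"
proof (intro conjI)
  show "\<forall>n m p A B C f L r V.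
            data_hyps n m p A B C f L r \<longrightarrow>
            kernel_basis n (calC n p A C r) V \<longrightarrow>
            det_cond n m p A B C L r \<longrightarrow>
            lyapunov_transformation n (calU n V (calC n p A C r) (calB n m A B L r))"
    using part1 by blast
  show "\<exists>n m p A B C f L r V.
            data_hyps n m p A B C f L r \<and>
            kernel_basis n (calC n p A C r) V \<and>
            lyapunov_transformation n (calU n V (calC n p A C r) (calB n m A B L r)) \<and>
            \<not> det_cond n m p A B C L r"
    by (rule part2)
qed

end
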